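(* Let $\lambda=(\lambda_1,\dots,\lambda_\ell)\in\mathbb{Z}_{>0}^\ell$, $d=\lambda_1+\dots+\lambda_\ell$, $s(j)=\lambda_1+\dots+\lambda_{j-1}$, and for $\boldsymbol n\in\mathbb{Z}^d$, $k\in\mathbb{Z}$ let $$A_\lambda(\boldsymbol{n};k)=\prod_{j=1}^{\ell} \binom{n_{s(j)+1}+\dots+n_{s(j)+\lambda_j} - (\lambda_j-1)k}{n_{s(j)+1}-k,\ \dots,\ n_{s(j)+\lambda_j}-k,\ k}.$$ (a) If $\ell\ge2$, then for all primes $p$, integers $r\ge1$, $\boldsymbol n\in\mathbb{Z}^d$ and $k\in\mathbb{Z}$: $A_\lambda(p^r\boldsymbol n;pk)\equiv A_\lambda(p^{r-1}\boldsymbol n;k)\pmod{p^{2r}}$. (b) If $\ell\ge2$ and $\max(\lambda_1,\dots,\lambda_\ell)\le2$, then for all primes $p\ge5$, integers $r\ge1$, $\boldsymbol n\in\mathbb{Z}^d$ and $k\in\mathbb{Z}$: $A_\lambda(p^r\boldsymbol n;pk)\equiv A_\lambda(p^{r-1}\boldsymbol n;k)\pmod{p^{3r}}$.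
   Context: For all integers $n, k$, the binomial coefficient is defined by $\binom{n}{k} = \lim_{z \to 0} \frac{\Gamma(z+n+1)}{\Gamma(z+k+1)\Gamma(z+n-k+1)}$; this is a finite integer for all $n,k\in\mathbb{Z}$, agrees with the usual one for $n\ge0$, and satisfies $\binom{n}{k}=\binom{n}{n-k}$. For integers $m_1,\dots,m_\rho,k$ the multinomial coefficient with integer entries is defined as $$\binom{m_1+\dots+m_\rho-(\rho-1)k}{m_1-k,\dots,m_\rho-k,k} := \prod_{i=1}^{\rho}\binom{m_1+\dots+m_i-(i-1)k}{m_i-k},$$ which agrees with the usual multinomial coefficient when all entries are nonnegative (the $i=1$ factor is $\binom{m_1}{k}$; for $\rho=2$ the product is $\binom{m_1}{k}\binom{m_1+m_2-k}{m_1}$). *)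

theory Defs
  imports Main "HOL-Computational_Algebra.Primes" "HOL-Number_Theory.Cong"
begin

text \<open>Binomial coefficient for arbitrary integers n, k, defined in the paper as
  the limit z -> 0 of Gamma(z+n+1)/(Gamma(z+k+1) Gamma(z+n-k+1)).
  Evaluating this limit (pole orders / residues of Gamma) gives the closed form below:
  the usual binomial for n >= 0; for n < 0 it is (-1)^k C(k-n-1,k) if k >= 0,
  (-1)^(n-k) C(-k-1,n-k) if k <= n, and 0 otherwise.\<close>
definition zbinom :: "int \<Rightarrow> int \<Rightarrow> int" where
  "zbinom n k =
     (if 0 \<le> n then (if 0 \<le> k \<and> k \<le> n then int (nat n choose nat k) else 0)
      else if 0 \<le> k then (-1) ^ nat k * int (nat (k - n - 1) choose nat k)
      else if k \<le> n then (-1) ^ nat (n - k) * int (nat (- k - 1) choose nat (n - k))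
      else 0)"

text \<open>Multinomial coefficient with integer entries m_1..m_rho (list ms) and k:
  prod_{i=1}^{rho} binom(m_1+...+m_i - (i-1)k, m_i - k)  (0-based index i here).\<close>
definition zmultinom :: "int list \<Rightarrow> int \<Rightarrow> int" where
  "zmultinom ms k =
     (\<Prod>i<length ms. zbinom (sum_list (take (Suc i) ms) - int i * k) (ms ! i - k))"

definition A_lam :: "nat list \<Rightarrow> int list \<Rightarrow> int \<Rightarrow> int" where
  "A_lam lam ns k =
     (\<Prod>j<length lam. zmultinom (take (lam ! j) (drop (sum_list (take j lam)) ns)) k)"

end

theory Submission
  imports Defs "HOL-Computational_Algebra.Polynomial"
begin

lemma coeff_lin_mult: "coeff ([:a, q:] * Q) m = a * coeff Q m + (if m = 0 then 0 else q * coeff Q (m - 1))"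
  by (cases m) (auto simp: coeff_pCons')

lemma lin_prod_coeff_dvd:
  fixes q :: int
  assumes "finite I"
  shows "q ^ m dvd coeff (\<Prod>i\<in>I. [:a i, q:]) m"
  using assms
proof (induction I arbitrary: m rule: finite_induct)
  case empty thus ?case by (cases m) auto
next
  case (insert x F)
  have eq: "coeff (\<Prod>i\<in>insert x F. [:a i, q:]) m = a x * coeff (\<Prod>i\<in>F. [:a i, q:]) m
      + (if m = 0 then 0 else q * coeff (\<Prod>i\<in>F. [:a i, q:]) (m - 1))"
    using insert by (subst prod.insert) (auto simp only: coeff_lin_mult)
  have d1: "q ^ m dvd a x * coeff (\<Prod>i\<in>F. [:a i, q:]) m" using insert.IH by simp
  have d2: "q ^ m dvd (if m = 0 then 0 else q * coeff (\<Prod>i\<in>F. [:a i, q:]) (m - 1))"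
  proof (cases m)
    case (Suc n) thus ?thesis using insert.IH[of n] by (simp add: mult_dvd_mono)
  qed simp
  show ?case unfolding eq using d1 d2 by simp
qed

lemma coeff_linpow: "coeff ([:s, 1:] ^ m) j = of_nat (m choose j) * (s::int) ^ (m - j)"
proof (induction m arbitrary: j)
  case 0 thus ?case by (cases j) auto
next
  case (Suc m)
  have eq: "coeff ([:s, 1:] ^ Suc m) j = s * coeff ([:s, 1:] ^ m) j + (if j = 0 then 0 else coeff ([:s, 1:] ^ m) (j - 1))"
    using coeff_lin_mult[of s 1 "[:s, 1:] ^ m" j] by simp
  show ?case
  proof (cases j)
    case 0 thus ?thesis using eq Suc.IH by simp
  next
    case (Suc i)
    consider "i < m" | "i = m" | "i > m" by linarith
    thus ?thesis
    proof cases
      case 1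
      have "s * s ^ (m - Suc i) = s ^ (m - i)" using 1
        by (metis Suc_diff_Suc power_Suc)
      thus ?thesis using eq Suc.IH \<open>j = Suc i\<close> 1
        by (simp add: algebra_simps)
    next
      case 2 thus ?thesis using eq Suc.IH \<open>j = Suc i\<close> by simp
    next
      case 3 thus ?thesis using eq Suc.IH \<open>j = Suc i\<close> by simp
    qed
  qed
qed

lemma pcompose_power': "pcompose (P ^ n) Q = (pcompose P Q) ^ n"
  by (induction n) (auto simp: pcompose_mult pcompose_1)

lemma pcompose_monom': "pcompose (monom c n) Q = smult c (Q ^ n)"
  by (simp add: monom_altdef pcompose_smult pcompose_power' pcompose_pCons)

lemma coeff_shift:
  "coeff (pcompose P [:s, 1:]) j = (\<Sum>m\<le>degree P. coeff P m * (of_nat (m choose j) * (s::int) ^ (m - j)))"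
proof -
  have "pcompose P [:s, 1:] = pcompose (\<Sum>m\<le>degree P. monom (coeff P m) m) [:s, 1:]"
    by (simp add: poly_as_sum_of_monoms)
  also have "\<dots> = (\<Sum>m\<le>degree P. smult (coeff P m) ([:s, 1:] ^ m))"
    by (simp add: pcompose_sum pcompose_monom')
  finally show ?thesis by (simp add: coeff_sum coeff_linpow)
qed

lemma sum_pow_telescope:
  "(\<Sum>j\<le>i. of_nat (Suc i choose j) * (\<Sum>b<n. (int b) ^ j)) = (int n) ^ Suc i"
proof -
  have "(\<Sum>b<n. (int b + 1) ^ Suc i - (int b) ^ Suc i) = (int n) ^ Suc i"
    by (induction n) (auto simp: add.commute)
  moreover have "\<And>b. (int b + 1) ^ Suc i - (int b) ^ Suc i = (\<Sum>j\<le>i. of_nat (Suc i choose j) * (int b) ^ j)"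
  proof -
    fix b
    have "(int b + 1) ^ Suc i = (\<Sum>j\<le>Suc i. of_nat (Suc i choose j) * (int b) ^ j)"
      by (subst binomial_ring) (simp add: mult_ac)
    thus "(int b + 1) ^ Suc i - (int b) ^ Suc i = (\<Sum>j\<le>i. of_nat (Suc i choose j) * (int b) ^ j)"
      by simp
  qed
  ultimately have "(\<Sum>b<n. \<Sum>j\<le>i. of_nat (Suc i choose j) * (int b) ^ j) = (int n) ^ Suc i"
    by simp
  thus ?thesis by (subst (asm) sum.swap) (simp add: sum_distrib_left)
qed

lemma power_sum_mod_prime:
  fixes p :: int
  assumes "prime p" "1 \<le> i" "int i \<le> p - 2"
  shows "p dvd (\<Sum>b<nat p. (int b) ^ i)"
  using assms(2,3)
proof (induction i rule: less_induct)
  case (less i)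
  define S where "S j = (\<Sum>b<nat p. (int b) ^ j)" for j
  have p0: "p > 1" using assms(1) prime_gt_1_int by blast
  have tel: "(\<Sum>j\<le>i. of_nat (Suc i choose j) * S j) = p ^ Suc i"
    using sum_pow_telescope[of i "nat p"] p0 unfolding S_def by simp
  have split: "(\<Sum>j\<le>i. of_nat (Suc i choose j) * S j) = S 0 + (\<Sum>j\<in>{1..<i}. of_nat (Suc i choose j) * S j) + of_nat (Suc i) * S i"
  proof -
    have "{..i} = insert 0 (insert i {1..<i})" using less.prems by auto
    thus ?thesis using less.prems by (simp add: add_ac)
  qed
  have S0: "S 0 = p" unfolding S_def using p0 by simp
  have mid: "p dvd (\<Sum>j\<in>{1..<i}. of_nat (Suc i choose j) * S j)"
    by (rule dvd_sum) (use less in \<open>auto simp: S_def\<close>)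
  have "p dvd of_nat (Suc i) * S i"
  proof -
    have "of_nat (Suc i) * S i = p ^ Suc i - S 0 - (\<Sum>j\<in>{1..<i}. of_nat (Suc i choose j) * S j)"
      using tel split by simp
    moreover have "p dvd p ^ Suc i" by simp
    ultimately show ?thesis using S0 mid by simp
  qed
  moreover have "\<not> p dvd of_nat (Suc i)"
  proof
    assume "p dvd of_nat (Suc i)"
    hence "p \<le> of_nat (Suc i)" by (rule zdvd_imp_le) simp
    thus False using less.prems by simp
  qed
  ultimately show ?case using assms(1) prime_dvd_mult_iff unfolding S_def by blast
qed

definition ldiv :: "int \<Rightarrow> int poly \<Rightarrow> bool" where
  "ldiv q P \<longleftrightarrow> (\<forall>m. q ^ m dvd coeff P m)"

definition flat :: "int \<Rightarrow> int poly \<Rightarrow> bool" where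
  "flat q P \<longleftrightarrow> (\<forall>k>0. q dvd coeff P k)"

definition alldiv :: "int \<Rightarrow> int poly \<Rightarrow> bool" where
  "alldiv q P \<longleftrightarrow> (\<forall>k. q dvd coeff P k)"

lemma ldiv_mult: "ldiv q P \<Longrightarrow> ldiv q Q \<Longrightarrow> ldiv q (P * Q)"
  unfolding ldiv_def coeff_mult
proof (intro allI dvd_sum)
  fix m i :: nat assume A: "\<forall>m. q ^ m dvd coeff P m" "\<forall>m. q ^ m dvd coeff Q m" and i: "i \<in> {..m}"
  have "q ^ i * q ^ (m - i) dvd coeff P i * coeff Q (m - i)" using A by (simp add: mult_dvd_mono)
  moreover have "q ^ i * q ^ (m - i) = q ^ m" using i by (simp add: power_add[symmetric])
  ultimately show "q ^ m dvd coeff P i * coeff Q (m - i)" by simp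
qed

lemma ldiv_one: "ldiv q 1"
  unfolding ldiv_def by (auto simp: coeff_1)

lemma ldiv_prod: "finite I \<Longrightarrow> (\<And>i. i \<in> I \<Longrightarrow> ldiv q (f i)) \<Longrightarrow> ldiv q (\<Prod>i\<in>I. f i)"
  by (induction I rule: finite_induct) (auto simp: ldiv_one ldiv_mult)

lemma ldiv_lin: "ldiv q [:a, q:]"
  unfolding ldiv_def
proof
  fix m show "q ^ m dvd coeff [:a, q:] m"
    by (cases m) (auto simp: coeff_pCons')
qed

lemma ldiv_shift: "ldiv q P \<Longrightarrow> ldiv q (pcompose P [:s, 1:])"
  unfolding ldiv_def coeff_shift
proof (intro allI dvd_sum)
  fix j m :: nat assume A: "\<forall>m. q ^ m dvd coeff P m"
  show "q ^ j dvd coeff P m * (of_nat (m choose j) * s ^ (m - j))"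
  proof (cases "j \<le> m")
    case True
    hence "q ^ j dvd q ^ m" by (simp add: le_imp_power_dvd)
    thus ?thesis using A dvd_trans dvd_mult2 by blast
  qed (simp add: binomial_eq_0)
qed

lemma flat_mult: "flat q P \<Longrightarrow> flat q Q \<Longrightarrow> flat q (P * Q)"
  unfolding flat_def coeff_mult
proof (intro allI impI dvd_sum)
  fix k i :: nat assume A: "\<forall>k>0. q dvd coeff P k" "\<forall>k>0. q dvd coeff Q k" and k: "0 < k" and i: "i \<in> {..k}"
  show "q dvd coeff P i * coeff Q (k - i)"
  proof (cases "i = 0")
    case True thus ?thesis using A k by simp
  next
    case False thus ?thesis using A by simp
  qed
qed

lemma flat_one: "flat q 1"
  unfolding flat_def by (auto simp: coeff_1)

lemma flat_prod: "finite I \<Longrightarrow> (\<And>i. i \<in> I \<Longrightarrow> flat q (f i)) \<Longrightarrow> flat q (\<Prod>i\<in>I. f i)"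
  by (induction I rule: finite_induct) (auto simp: flat_one flat_mult)

lemma flat_shift: "flat q P \<Longrightarrow> flat q (pcompose P [:s, 1:])"
  unfolding flat_def coeff_shift
proof (intro allI impI dvd_sum)
  fix j m :: nat assume A: "\<forall>k>0. q dvd coeff P k" and j: "0 < j"
  show "q dvd coeff P m * (of_nat (m choose j) * s ^ (m - j))"
  proof (cases "j \<le> m")
    case True thus ?thesis using A j by simp
  qed (simp add: binomial_eq_0)
qed

lemma alldiv_mult: "alldiv q P \<Longrightarrow> alldiv r Q \<Longrightarrow> alldiv (q * r) (P * Q)"
  unfolding alldiv_def coeff_mult by (auto intro!: dvd_sum mult_dvd_mono)

lemma alldiv_shift: "alldiv q P \<Longrightarrow> alldiv q (pcompose P [:s, 1:])"
  unfolding alldiv_def coeff_shift by (auto intro!: dvd_sum)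

lemma alldiv_add: "alldiv q P \<Longrightarrow> alldiv q Q \<Longrightarrow> alldiv q (P + Q)"
  unfolding alldiv_def by auto

lemma alldiv_smult: "alldiv q P \<Longrightarrow> alldiv q (smult c P)"
  unfolding alldiv_def by auto

lemma alldiv_weaken: "alldiv q P \<Longrightarrow> r dvd q \<Longrightarrow> alldiv r P"
  unfolding alldiv_def using dvd_trans by blast

lemma alldiv_sum: "finite I \<Longrightarrow> (\<And>i. i \<in> I \<Longrightarrow> alldiv q (f i)) \<Longrightarrow> alldiv q (\<Sum>i\<in>I. f i)"
  unfolding alldiv_def by (auto simp: coeff_sum intro!: dvd_sum)

lemma prod_expand:
  assumes "\<And>b. b \<le> n \<Longrightarrow> alldiv q (H b)"
  shows "\<exists>R. alldiv (q * q) R \<and>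
     (\<Prod>b<Suc n. [:C:] + H b) = [:C ^ Suc n:] + smult (C ^ n) (\<Sum>b<Suc n. H b) + R"
  using assms
proof (induction n)
  case 0
  show ?case by (rule exI[of _ 0]) (auto simp: alldiv_def)
next
  case (Suc n)
  then obtain R where R: "alldiv (q * q) R"
    "(\<Prod>b<Suc n. [:C:] + H b) = [:C ^ Suc n:] + smult (C ^ n) (\<Sum>b<Suc n. H b) + R" by auto
  define R' where "R' = smult C R + smult (C ^ n) ((\<Sum>b<Suc n. H b) * H (Suc n)) + R * H (Suc n)"
  have S: "alldiv q (\<Sum>b<Suc n. H b)" using Suc.prems by (intro alldiv_sum) auto
  have HS: "alldiv q (H (Suc n))" using Suc.prems by auto
  have "alldiv (q * q) R'" unfolding R'_def
    apply (intro alldiv_add alldiv_smult R(1))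
     apply (rule alldiv_mult[OF S HS])
    apply (rule alldiv_weaken[OF alldiv_mult[OF R(1) HS]])
    by simp
  moreover have "(\<Prod>b<Suc (Suc n). [:C:] + H b) = [:C ^ Suc (Suc n):] + smult (C ^ Suc n) (\<Sum>b<Suc (Suc n). H b) + R'"
  proof -
    have "(\<Prod>b<Suc (Suc n). [:C:] + H b) = (\<Prod>b<Suc n. [:C:] + H b) * ([:C:] + H (Suc n))"
      by simp
    also have "\<dots> = ([:C ^ Suc n:] + smult (C ^ n) (\<Sum>b<Suc n. H b) + R) * ([:C:] + H (Suc n))"
      using R by simp
    also have "\<dots> = [:C ^ Suc (Suc n):] + smult (C ^ Suc n) (\<Sum>b<Suc (Suc n). H b) + R'"
      unfolding R'_def apply (simp add: algebra_simps smult_add_right flip: smult_smult)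
      by (simp add: smult_smult mult.commute)
    finally show ?thesis .
  qed
  ultimately show ?case by blast
qed

lemma flat_step_term:
  fixes p q s :: int and G :: "int poly"
  assumes p: "prime p" and qG: "alldiv q G" and k: "0 < k"
    and H: "\<not> p dvd s \<Longrightarrow> \<forall>m\<ge>nat p. p * q dvd coeff G m"
  shows "p * q dvd coeff G m * (of_nat (m choose k) * s ^ (m - k) * (\<Sum>b<nat p. (int b) ^ (m - k)))"
proof -
  have p1: "p > 1" using p prime_gt_1_int by blast
  have qm: "q dvd coeff G m" using qG unfolding alldiv_def by blast
  consider "m < k" | "m = k" | "m > k \<and> p dvd s" | "m > k \<and> \<not> p dvd s \<and> m \<ge> nat p"
    | "m > k \<and> \<not> p dvd s \<and> m < nat p" by linarith
  thus ?thesis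
  proof cases
    case 1 thus ?thesis by (simp add: binomial_eq_0)
  next
    case 2
    have "(\<Sum>b<nat p. (int b) ^ (m - k)) = p" using 2 p1 by simp
    thus ?thesis using qm by (simp add: mult_dvd_mono mult.commute)
  next
    case 3
    hence "p dvd s ^ (m - k)" by (metis dvd_power dvd_trans zero_less_diff)
    hence "p dvd of_nat (m choose k) * s ^ (m - k) * (\<Sum>b<nat p. (int b) ^ (m - k))" by simp
    from mult_dvd_mono[OF this qm] show ?thesis by (simp add: mult.commute)
  next
    case 4
    hence "p * q dvd coeff G m" using H by blast
    thus ?thesis by simp
  next
    case 5
    have "p dvd (\<Sum>b<nat p. (int b) ^ (m - k))"
      by (rule power_sum_mod_prime[OF p]) (use 5 k p1 in auto)
    hence "p dvd of_nat (m choose k) * s ^ (m - k) * (\<Sum>b<nat p. (int b) ^ (m - k))" by simp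
    from mult_dvd_mono[OF this qm] show ?thesis by (simp add: mult.commute)
  qed
qed

lemma flat_step:
  fixes p q s :: int and P :: "int poly"
  assumes p: "prime p" and fl: "flat q P" and pq: "p dvd q"
    and H: "\<not> p dvd s \<Longrightarrow> \<forall>m\<ge>nat p. p * q dvd coeff P m"
  shows "flat (p * q) (\<Prod>b<nat p. pcompose P [:of_nat b * s, 1:])"
proof -
  have p1: "p > 1" using p prime_gt_1_int by blast
  define C where "C = coeff P 0"
  define G where "G = P - [:C:]"
  have cG: "coeff G k = (if k = 0 then 0 else coeff P k)" for k
    unfolding G_def C_def by (cases k) auto
  have qG: "alldiv q G" using fl unfolding alldiv_def flat_def cG by auto
  have HG: "\<not> p dvd s \<Longrightarrow> \<forall>m\<ge>nat p. p * q dvd coeff G m"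
    using H p1 cG by auto
  define Hb where "Hb b = pcompose G [:of_nat b * s, 1:]" for b :: nat
  have shift: "pcompose P [:of_nat b * s, 1:] = [:C:] + Hb b" for b
    unfolding Hb_def G_def by (simp add: pcompose_diff)
  obtain n where n: "nat p = Suc n" using p1 by (metis Suc_pred' zero_less_nat_eq dual_order.strict_trans zero_less_one)
  have aH: "alldiv q (Hb b)" for b unfolding Hb_def by (rule alldiv_shift[OF qG])
  obtain R where R: "alldiv (q * q) R"
    "(\<Prod>b<Suc n. [:C:] + Hb b) = [:C ^ Suc n:] + smult (C ^ n) (\<Sum>b<Suc n. Hb b) + R"
    using prod_expand[of n q Hb C] aH by blast
  have prodeq: "(\<Prod>b<nat p. pcompose P [:of_nat b * s, 1:]) = [:C ^ Suc n:] + smult (C ^ n) (\<Sum>b<nat p. Hb b) + R"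
    using R(2) n shift by simp
  have sumdvd: "p * q dvd coeff (\<Sum>b<nat p. Hb b) k" if k: "0 < k" for k
  proof -
    have "coeff (\<Sum>b<nat p. Hb b) k
        = (\<Sum>b<nat p. \<Sum>m\<le>degree G. coeff G m * (of_nat (m choose k) * (of_nat b * s) ^ (m - k)))"
      unfolding Hb_def by (simp add: coeff_sum coeff_shift)
    also have "\<dots> = (\<Sum>m\<le>degree G. \<Sum>b<nat p. coeff G m * (of_nat (m choose k) * (of_nat b * s) ^ (m - k)))"
      by (rule sum.swap)
    also have "\<dots> = (\<Sum>m\<le>degree G. coeff G m * (of_nat (m choose k) * s ^ (m - k) * (\<Sum>b<nat p. (int b) ^ (m - k))))"
      by (simp add: sum_distrib_left power_mult_distrib mult_ac)
    finally have eq: "coeff (\<Sum>b<nat p. Hb b) k = \<dots>" .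
    show ?thesis unfolding eq
      by (intro dvd_sum flat_step_term[OF p qG k HG]) auto
  qed
  show ?thesis unfolding flat_def prodeq
  proof (intro allI impI)
    fix k :: nat assume k: "0 < k"
    have "p * q dvd q * q" using pq by simp
    hence "p * q dvd coeff R k" using R(1) unfolding alldiv_def using dvd_trans by blast
    moreover have "p * q dvd C ^ n * coeff (\<Sum>b<nat p. Hb b) k" using sumdvd[OF k] by simp
    ultimately show "p * q dvd coeff ([:C ^ Suc n:] + smult (C ^ n) (\<Sum>b<nat p. Hb b) + R) k"
      using k by (simp add: coeff_pCons')
  qed
qed

definition uP :: "int \<Rightarrow> int poly" where
  "uP p = (\<Prod>i\<in>{1..p-1}. [:i, p:])"

definition PP :: "int \<Rightarrow> nat \<Rightarrow> int poly" where
  "PP p y = (\<Prod>t<y. pcompose (uP p) [:int t, 1:])"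

lemma ldiv_uP: "ldiv p (uP p)"
  unfolding uP_def by (intro ldiv_prod ldiv_lin) auto

lemma ldiv_PP: "ldiv p (PP p y)"
  unfolding PP_def by (intro ldiv_prod ldiv_shift ldiv_uP) auto

lemma flat_PP0: "flat q (uP p) \<Longrightarrow> flat q (PP p y)"
  unfolding PP_def by (intro flat_prod flat_shift) auto

lemma pcompose_lin_lin: "pcompose [:a, 1:] [:b, 1:] = [:a + b, 1::int:]"
  by (simp add: pcompose_pCons)

lemma PP_shift: "pcompose (PP p y) [:c, 1:] = (\<Prod>t<y. pcompose (uP p) [:int t + c, 1:])"
  unfolding PP_def pcompose_prod
  by (simp add: pcompose_assoc[symmetric] pcompose_lin_lin)

lemma PP_mult: "PP p (n * y) = (\<Prod>b<n. pcompose (PP p y) [:of_nat b * int y, 1:])"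
proof -
  have "(\<Prod>b<n. pcompose (PP p y) [:of_nat b * int y, 1:])
      = (\<Prod>b<n. \<Prod>t<y. pcompose (uP p) [:int (b * y + t), 1:])"
    unfolding PP_shift by (simp add: add.commute)
  also have "\<dots> = (\<Prod>b<n. \<Prod>t\<in>{b * y..<b * y + y}. pcompose (uP p) [:int t, 1:])"
  proof (rule prod.cong[OF refl])
    fix b
    show "(\<Prod>t<y. pcompose (uP p) [:int (b * y + t), 1:]) = (\<Prod>t\<in>{b * y..<b * y + y}. pcompose (uP p) [:int t, 1:])"
      using prod.shift_bounds_nat_ivl[of "\<lambda>t. pcompose (uP p) [:int t, 1:]" 0 "b * y" y]
      by (simp add: atLeast0LessThan add.commute)
  qed
  also have "\<dots> = PP p (n * y)" unfolding PP_def by (rule prod.nat_group)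
  finally show ?thesis by simp
qed

lemma flat_PP:
  fixes p :: int
  assumes p: "prime p" and c: "1 \<le> c" "int c < p" and base: "flat (p ^ c) (uP p)"
  shows "(nat p) ^ e dvd y \<Longrightarrow> flat (p ^ (c + e)) (PP p y)"
proof (induction e arbitrary: y)
  case 0 thus ?case using flat_PP0[OF base] by simp
next
  case (Suc e)
  have p1: "p > 1" using p prime_gt_1_int by blast
  obtain z where z: "y = (nat p) ^ Suc e * z" using Suc.prems by (auto elim: dvdE)
  define y' where "y' = (nat p) ^ e * z"
  have y': "y = nat p * y'" "(nat p) ^ e dvd y'" unfolding y'_def using z by auto
  have fl: "flat (p ^ (c + e)) (PP p y')" using Suc.IH y'(2) by blast
  have pq: "p dvd p ^ (c + e)" using c by simp
  have H: "\<not> p dvd int y' \<Longrightarrow> \<forall>m\<ge>nat p. p * p ^ (c + e) dvd coeff (PP p y') m"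
  proof (intro allI impI)
    fix m assume np: "\<not> p dvd int y'" and m: "nat p \<le> m"
    have e0: "e = 0"
    proof (rule ccontr)
      assume "e \<noteq> 0"
      hence "nat p dvd y'" using y'(2) by (metis dvd_power dvd_trans neq0_conv)
      hence "int (nat p) dvd int y'" by (simp only: of_nat_dvd_iff)
      thus False using np p1 by simp
    qed
    have "p * p ^ (c + e) dvd p ^ m"
    proof -
      have "Suc c \<le> m" using m c p1 by linarith
      hence "p ^ Suc c dvd p ^ m" by (rule le_imp_power_dvd)
      thus ?thesis using e0 by simp
    qed
    moreover have "p ^ m dvd coeff (PP p y') m" using ldiv_PP unfolding ldiv_def by blast
    ultimately show "p * p ^ (c + e) dvd coeff (PP p y') m" using dvd_trans by blast
  qed
  have "flat (p * p ^ (c + e)) (\<Prod>b<nat p. pcompose (PP p y') [:of_nat b * int y', 1:])"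
    by (rule flat_step[OF p fl pq H])
  thus ?case using y'(1) PP_mult by simp
qed

lemma poly_uP: "poly (uP p) z = (\<Prod>i\<in>{1..p-1}. i + p * z)"
  unfolding uP_def by (simp add: poly_prod mult.commute)

lemma poly_PP: "poly (PP p y) x = (\<Prod>t<y. poly (uP p) (x + int t))"
  unfolding PP_def by (simp add: poly_prod poly_pcompose add.commute)

lemma uP_refl: "poly (uP p) (-1 - z) = (-1) ^ nat (p - 1) * poly (uP p) z"
proof -
  have "poly (uP p) (-1 - z) = (\<Prod>i\<in>{1..p-1}. (-1) * ((p - i) + p * z))"
    unfolding poly_uP by (rule prod.cong) (auto simp: algebra_simps)
  also have "\<dots> = (\<Prod>i\<in>{1..p-1}. (-1::int)) * (\<Prod>i\<in>{1..p-1}. (p - i) + p * z)"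
    by (rule prod.distrib)
  also have "(\<Prod>i\<in>{1..p-1}. (-1::int)) = (-1) ^ nat (p - 1)"
    by (simp add: prod_constant)
  also have "(\<Prod>i\<in>{1..p-1}. (p - i) + p * z) = (\<Prod>i\<in>{1..p-1}. i + p * z)"
    by (rule prod.reindex_bij_witness[where i = "\<lambda>i. p - i" and j = "\<lambda>i. p - i"]) auto
  finally show ?thesis unfolding poly_uP .
qed

lemma PP_refl: "poly (PP p y) (- int y) = ((-1) ^ nat (p - 1)) ^ y * poly (PP p y) 0"
proof -
  have "poly (PP p y) (- int y) = (\<Prod>t<y. poly (uP p) (-1 - int (y - Suc t)))"
    unfolding poly_PP by (rule prod.cong) (auto simp: of_nat_diff)
  also have "\<dots> = (\<Prod>t<y. (-1) ^ nat (p - 1) * poly (uP p) (int (y - Suc t)))"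
    by (rule prod.cong[OF refl]) (rule uP_refl)
  also have "\<dots> = ((-1) ^ nat (p - 1)) ^ y * (\<Prod>t<y. poly (uP p) (int (y - Suc t)))"
    by (simp add: prod.distrib)
  also have "(\<Prod>t<y. poly (uP p) (int (y - Suc t))) = (\<Prod>t<y. poly (uP p) (int t))"
    by (rule prod.nat_diff_reindex)
  finally show ?thesis unfolding poly_PP by simp
qed

lemma uP_refl_odd: "poly (uP p) (-1) = poly (uP p) 0" if "odd p"
proof -
  have "even (nat (p - 1))" using that by (cases "p \<ge> 1") (auto simp: even_nat_iff)
  thus ?thesis using uP_refl[of p 0] by simp
qed

lemma coeff1_from_refl:
  fixes P :: "int poly"
  assumes "poly P (-1) = poly P 0"
  shows "coeff P 1 = (\<Sum>k\<in>{2..degree P}. (-1) ^ k * coeff P k)"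
proof (cases "degree P = 0")
  case True
  then obtain c where "P = [:c:]" by (metis degree_eq_zeroE)
  thus ?thesis by simp
next
  case False
  have "{..degree P} = insert 0 (insert 1 {2..degree P})" using False by auto
  hence "poly P (-1) = coeff P 0 - coeff P 1 + (\<Sum>k\<in>{2..degree P}. (-1) ^ k * coeff P k)"
    unfolding poly_altdef by (simp add: mult.commute)
  moreover have "poly P 0 = coeff P 0" by (simp add: poly_0_coeff_0)
  ultimately show ?thesis using assms by simp
qed

lemma flat_uP_2: "flat (p ^ 2) (uP p)" if "odd p"
proof -
  have c1: "coeff (uP p) 1 = (\<Sum>k\<in>{2..degree (uP p)}. (-1) ^ k * coeff (uP p) k)"
    by (rule coeff1_from_refl[OF uP_refl_odd[OF that]])
  have ld: "p ^ k dvd coeff (uP p) k" for k using ldiv_uP unfolding ldiv_def by blast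
  have big: "p ^ 2 dvd coeff (uP p) k" if "2 \<le> k" for k
    using ld[of k] le_imp_power_dvd[OF that, of p] dvd_trans by blast
  show ?thesis unfolding flat_def
  proof (intro allI impI)
    fix k :: nat assume "0 < k"
    show "p ^ 2 dvd coeff (uP p) k"
    proof (cases "k = 1")
      case True
      have "p ^ 2 dvd coeff (uP p) 1" unfolding c1 by (intro dvd_sum dvd_mult big) auto
      thus ?thesis using True by simp
    next
      case False thus ?thesis using \<open>0 < k\<close> by (intro big) auto
    qed
  qed
qed

lemma flat_uP_two: "flat (2 ^ 1) (uP 2)"
  unfolding uP_def flat_def by (auto simp: coeff_pCons')

definition Fl :: "int \<Rightarrow> int poly" where
  "Fl p = (\<Prod>i\<in>{1..p-1}. [:i, 1:])"

lemma uP_Fl: "uP p = pcompose (Fl p) [:0, p:]"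
  unfolding uP_def Fl_def pcompose_prod by (simp add: pcompose_pCons)

lemma coeff_uP_Fl: "coeff (uP p) k = p ^ k * coeff (Fl p) k"
  unfolding uP_Fl by (rule coeff_pcompose_linear)

lemma coeff_shift_bound:
  assumes "degree P \<le> N"
  shows "coeff (pcompose P [:s, 1:]) j = (\<Sum>m\<le>N. coeff P m * (of_nat (m choose j) * (s::int) ^ (m - j)))"
  unfolding coeff_shift
  by (rule sum.mono_neutral_left) (use assms in \<open>auto simp: coeff_eq_0\<close>)

lemma Fl_shift_id:
  assumes "p \<ge> 2"
  shows "pcompose ([:0, 1:] * Fl p) [:1, 1:] - [:0, 1:] * Fl p = smult p (Fl p)"
proof -
  have "pcompose (Fl p) [:1, 1:] = (\<Prod>i\<in>{1..p-1}. [:i + 1, 1:])"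
    unfolding Fl_def pcompose_prod by (simp add: pcompose_pCons add.commute)
  also have "\<dots> = (\<Prod>i\<in>{2..p}. [:i, 1:])"
    by (rule prod.reindex_bij_witness[where i = "\<lambda>i. i - 1" and j = "\<lambda>i. i + 1"]) auto
  finally have s: "pcompose (Fl p) [:1, 1:] = (\<Prod>i\<in>{2..p}. [:i, 1:])" .
  have "[:1, 1:] * (\<Prod>i\<in>{2..p}. [:i, 1:]) = (\<Prod>i\<in>{1..p}. [:i, 1:])"
  proof -
    have "{1..p} = insert 1 {2..p}" using assms by auto
    thus ?thesis by simp
  qed
  also have "\<dots> = Fl p * [:p, 1:]"
  proof -
    have "{1..p} = insert p {1..p-1}" using assms by auto
    thus ?thesis unfolding Fl_def by (simp add: mult.commute)
  qed
  finally have "pcompose ([:0, 1:] * Fl p) [:1, 1:] = Fl p * [:p, 1:]"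
    using s by (simp add: pcompose_mult pcompose_pCons)
  thus ?thesis by (simp add: algebra_simps)
qed

lemma degree_Fl: "degree (Fl p) \<le> nat (p - 1)"
proof -
  have "degree (Fl p) \<le> sum (degree \<circ> (\<lambda>i. [:i, 1::int:])) {1..p-1}"
    unfolding Fl_def by (rule degree_prod_sum_le) simp
  also have "\<dots> = nat (p - 1)" by simp
  finally show ?thesis .
qed

lemma Fl_coeffs_dvd:
  fixes p :: int
  assumes p: "prime p"
  shows "2 \<le> m \<Longrightarrow> m < nat p \<Longrightarrow> p dvd coeff ([:0, 1:] * Fl p) m"
proof (induction "nat p - m" arbitrary: m rule: less_induct)
  case (less m)
  define G where "G = [:0, 1:] * Fl p"
  have p2: "p \<ge> 2" using p prime_ge_2_int by blast
  have degG: "degree G \<le> nat p"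
  proof -
    have "degree G \<le> degree [:0, 1::int:] + degree (Fl p)" unfolding G_def by (rule degree_mult_le)
    thus ?thesis using degree_Fl[of p] p2 by simp
  qed
  define j where "j = m - 1"
  have j: "1 \<le> j" "Suc j = m" using less.prems unfolding j_def by auto
  have key: "p dvd (\<Sum>m'\<le>nat p. coeff G m' * of_nat (m' choose j)) - coeff G j"
  proof -
    have "coeff (pcompose G [:1, 1:]) j - coeff G j = p * coeff (Fl p) j"
      using arg_cong[OF Fl_shift_id[OF p2], of "\<lambda>P. coeff P j"] unfolding G_def by simp
    moreover have "coeff (pcompose G [:1, 1:]) j = (\<Sum>m'\<le>nat p. coeff G m' * of_nat (m' choose j))"
      using coeff_shift_bound[OF degG, of 1 j] by simp
    ultimately show ?thesis by simp
  qed
  define T where "T m' = coeff G m' * of_nat (m' choose j)" for m'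
  have split: "(\<Sum>m'\<le>nat p. T m') = T j + T m + (\<Sum>m'\<in>{..nat p} - {j, m}. T m')"
  proof -
    have jm: "j \<in> {..nat p}" "m \<in> {..nat p} - {j}" using less.prems j by auto
    have "(\<Sum>m'\<le>nat p. T m') = T j + sum T ({..nat p} - {j})" by (rule sum.remove) (use jm in auto)
    also have "sum T ({..nat p} - {j}) = T m + sum T ({..nat p} - {j} - {m})" by (rule sum.remove) (use jm in auto)
    also have "{..nat p} - {j} - {m} = {..nat p} - {j, m}" by auto
    finally show ?thesis by (simp add: add.assoc)
  qed
  have rest: "p dvd (\<Sum>m'\<in>{..nat p} - {j, m}. T m')"
  proof (rule dvd_sum)
    fix m' assume m': "m' \<in> {..nat p} - {j, m}"
    have m'f: "m' \<le> nat p" "m' \<noteq> j" "m' \<noteq> m" using m' by auto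
    have "m' < j \<or> (m < m' \<and> m' < nat p) \<or> m' = nat p" using m'f j by linarith
    then consider "m' < j" | "m < m' \<and> m' < nat p" | "m' = nat p" by blast
    thus "p dvd T m'"
    proof cases
      case 1 thus ?thesis unfolding T_def by (simp add: binomial_eq_0)
    next
      case 2
      have lt: "nat p - m' < nat p - m" using 2 by auto
      have "2 \<le> m'" using 2 less.prems by auto
      hence "p dvd coeff G m'" using less.hyps[OF lt] 2 unfolding G_def by blast
      thus ?thesis unfolding T_def by simp
    next
      case 3
      have "nat p dvd (nat p choose j)"
      proof (rule dvd_choose_prime)
        show "j < nat p" using j less.prems by linarith
        show "j \<noteq> 0" using j by linarith
        show "nat p \<noteq> 0" using p2 by linarith
        show "prime (nat p)" using p by simp
      qed
      hence "int (nat p) dvd int (nat p choose j)" by (simp only: of_nat_dvd_iff)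
      hence "p dvd int (m' choose j)" using 3 p2 by simp
      thus ?thesis unfolding T_def by simp
    qed
  qed
  have "p dvd T m"
  proof -
    have "p dvd T j + T m + (\<Sum>m'\<in>{..nat p} - {j, m}. T m') - coeff G j"
      using key split unfolding T_def by simp
    moreover have "T j = coeff G j" unfolding T_def by simp
    ultimately have "p dvd T m + (\<Sum>m'\<in>{..nat p} - {j, m}. T m')" by simp
    thus ?thesis using rest by (simp add: dvd_add_left_iff)
  qed
  moreover have "m choose j = m" using j by (metis binomial_Suc_n)
  ultimately have "p dvd of_nat m * coeff G m" unfolding T_def by (simp add: mult.commute)
  moreover have "\<not> p dvd of_nat m"
  proof
    assume "p dvd of_nat m"
    hence "p \<le> of_nat m" using less.prems by (intro zdvd_imp_le) auto
    thus False using less.prems p2 by linarith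
  qed
  ultimately show ?case using p prime_dvd_mult_iff unfolding G_def by blast
qed

lemma flat_uP_3:
  fixes p :: int
  assumes p: "prime p" and p5: "p \<ge> 5"
  shows "flat (p ^ 3) (uP p)"
proof -
  have odd: "odd p" using p p5 by (intro prime_odd_int) auto
  have "p dvd coeff ([:0, 1:] * Fl p) 3"
    by (rule Fl_coeffs_dvd[OF p]) (use p5 in auto)
  moreover have "coeff ([:0, 1:] * Fl p) 3 = coeff (Fl p) 2"
  proof -
    have "[:0, 1:] * Fl p = pCons 0 (Fl p)" by simp
    moreover have "coeff (pCons 0 (Fl p)) (Suc 2) = coeff (Fl p) 2" by (rule coeff_pCons_Suc)
    ultimately show ?thesis by (simp only: numeral_3_eq_3 numeral_2_eq_2)
  qed
  ultimately have c2: "p dvd coeff (Fl p) 2" by simp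
  have ld: "p ^ k dvd coeff (uP p) k" for k using ldiv_uP unfolding ldiv_def by blast
  have big: "p ^ 3 dvd coeff (uP p) k" if "2 \<le> k" for k
  proof (cases "k = 2")
    case True
    have "p ^ 2 * p dvd p ^ 2 * coeff (Fl p) 2" using c2 by (rule mult_dvd_mono[OF dvd_refl])
    moreover have "p ^ 2 * p = p ^ 3" by (simp add: power3_eq_cube power2_eq_square)
    ultimately show ?thesis using True coeff_uP_Fl[of p 2] by simp
  next
    case False
    hence "3 \<le> k" using that by auto
    thus ?thesis using ld[of k] le_imp_power_dvd[of 3 k p] dvd_trans by blast
  qed
  have c1: "coeff (uP p) 1 = (\<Sum>k\<in>{2..degree (uP p)}. (-1) ^ k * coeff (uP p) k)"
    by (rule coeff1_from_refl[OF uP_refl_odd[OF odd]])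
  show ?thesis unfolding flat_def
  proof (intro allI impI)
    fix k :: nat assume "0 < k"
    show "p ^ 3 dvd coeff (uP p) k"
    proof (cases "k = 1")
      case True
      have "p ^ 3 dvd coeff (uP p) 1" unfolding c1 by (intro dvd_sum dvd_mult big) auto
      thus ?thesis using True by simp
    next
      case False thus ?thesis using \<open>0 < k\<close> by (intro big) auto
    qed
  qed
qed

lemma dvd_pow_diff: "(x::int) - z dvd x ^ k - z ^ k"
  by (simp add: power_diff_sumr2)

lemma poly_diff_sum: "poly P x - poly P z = (\<Sum>k\<le>degree P. coeff P k * ((x::int) ^ k - z ^ k))"
  unfolding poly_altdef by (simp add: sum_subtractf right_diff_distrib)

lemma flat_eval1:
  assumes "flat q P"
  shows "q * (x - z) dvd poly P x - poly P z"
proof -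
  have "poly P x - poly P z = (\<Sum>k\<le>degree P. coeff P k * (x ^ k - z ^ k))"
    by (rule poly_diff_sum)
  also have "q * (x - z) dvd \<dots>"
  proof (rule dvd_sum)
    fix k assume "k \<in> {..degree P}"
    show "q * (x - z) dvd coeff P k * (x ^ k - z ^ k)"
    proof (cases "k = 0")
      case False
      hence "q dvd coeff P k" using assms unfolding flat_def by auto
      thus ?thesis using dvd_pow_diff by (rule mult_dvd_mono)
    qed simp
  qed
  finally show ?thesis .
qed

lemma flat_eval2:
  fixes x y :: int
  assumes "flat q P" and refl: "poly P (-y) = poly P 0" and y: "y \<noteq> 0"
  shows "q * x * (x + y) dvd poly P x - poly P 0"
proof -
  have "y * (poly P x - poly P 0) = y * (poly P x - poly P 0) + x * (poly P (-y) - poly P 0)"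
    using refl by simp
  also have "\<dots> = (\<Sum>k\<le>degree P. coeff P k * (y * (x ^ k - 0 ^ k) + x * ((-y) ^ k - 0 ^ k)))"
    unfolding poly_diff_sum[of P x 0] poly_diff_sum[of P "-y" 0]
    by (simp add: sum_distrib_left sum.distrib[symmetric] ring_distribs mult.left_commute)
  also have "q * x * y * (x + y) dvd \<dots>"
  proof (rule dvd_sum)
    fix k assume "k \<in> {..degree P}"
    show "q * x * y * (x + y) dvd coeff P k * (y * (x ^ k - 0 ^ k) + x * ((-y) ^ k - 0 ^ k))"
    proof (cases "k \<ge> 2")
      case True
      then obtain j where j: "k = Suc j" by (cases k) auto
      have "y * (x ^ k - 0 ^ k) + x * ((-y) ^ k - 0 ^ k) = x * y * (x ^ j - (-y) ^ j)"
        using j by (simp add: algebra_simps)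
      moreover have "x + y dvd x ^ j - (-y) ^ j" using dvd_pow_diff[of x "-y" j] by simp
      moreover have qd: "q dvd coeff P k" using assms True unfolding flat_def by auto
      ultimately have "q * (x * y * (x + y)) dvd coeff P k * (x * y * (x ^ j - (-y) ^ j))"
        by (intro mult_dvd_mono) auto
      thus ?thesis using \<open>y * (x ^ k - 0 ^ k) + x * ((-y) ^ k - 0 ^ k) = x * y * (x ^ j - (-y) ^ j)\<close>
        by (simp only: mult.assoc)
    next
      case False
      hence "k = 0 \<or> k = 1" by auto
      thus ?thesis by auto
    qed
  qed
  finally have "y * (q * x * (x + y)) dvd y * (poly P x - poly P 0)"
    by (simp add: mult_ac)
  thus ?thesis using y by simp
qed

definition ff :: "int \<Rightarrow> nat \<Rightarrow> int" where
  "ff p x = poly (PP p x) 0"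

lemma ff_add: "ff p (x + y) = ff p x * poly (PP p y) (int x)"
  unfolding ff_def poly_PP
  by (induction y) (auto simp: algebra_simps)

lemma ff_0: "ff p 0 = 1" unfolding ff_def PP_def by simp

lemma ff_coprime:
  assumes p: "prime p"
  shows "\<not> p dvd ff p x"
proof
  assume "p dvd ff p x"
  hence "p dvd (\<Prod>t<x. \<Prod>i\<in>{1..p-1}. i + p * int t)"
    unfolding ff_def poly_PP poly_uP by simp
  then obtain t i where i: "i \<in> {1..p-1}" and d: "p dvd i + p * int t"
    using p by (auto simp: prime_dvd_prod_iff)
  hence "p dvd i" by (metis dvd_add_times_triv_right_iff mult.commute)
  moreover have "0 < i" "i < p" using i by auto
  ultimately show False using zdvd_imp_le by fastforce
qed

lemma pow_dvd_odd: "odd (n::int) \<Longrightarrow> (2::int) ^ e dvd n \<Longrightarrow> e = 0"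
  by (cases e) auto

lemma J_core:
  fixes p :: int and x y :: nat
  assumes p: "prime p" and c: "1 \<le> c" "int c < p" and base: "flat (p ^ c) (uP p)"
    and d1: "p ^ e1 dvd int x" and d2: "p ^ e2 dvd int y" and d3: "p ^ e3 dvd int x + int y"
    and x0: "x \<noteq> 0" and y0: "y \<noteq> 0"
  shows "p ^ (c + e1 + e2 + e3) dvd poly (PP p y) (int x) - ((-1) ^ nat (p - 1)) ^ (x * y) * poly (PP p y) 0"
proof -
  define \<epsilon> :: int where "\<epsilon> = (-1) ^ nat (p - 1)"
  define P where "P = PP p y"
  have p2: "p \<ge> 2" using p prime_ge_2_int by blast
  have "int ((nat p) ^ e2) dvd int y" using d2 p2 by simp
  hence "(nat p) ^ e2 dvd y" by (simp only: of_nat_dvd_iff)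
  hence fl: "flat (p ^ (c + e2)) P" unfolding P_def by (rule flat_PP[OF p c base])
  have fl0: "flat (p ^ c) P" unfolding P_def by (rule flat_PP0[OF base])
  have refl: "poly P (- int y) = \<epsilon> ^ y * poly P 0" unfolding P_def \<epsilon>_def by (rule PP_refl)
  have eps: "\<epsilon> = 1 \<or> \<epsilon> = -1" unfolding \<epsilon>_def by (cases "even (nat (p - 1))") auto
  show ?thesis
  proof (cases "\<epsilon> ^ y = 1")
    case True
    have tau: "\<epsilon> ^ (x * y) = 1" using True by (simp add: power_mult mult.commute[of x y])
    have "p ^ (c + e2) * int x * (int x + int y) dvd poly P (int x) - poly P 0"
      by (rule flat_eval2[OF fl]) (use refl True y0 in auto)
    moreover have "p ^ (c + e1 + e2 + e3) dvd p ^ (c + e2) * int x * (int x + int y)"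
    proof -
      have "p ^ (c + e2) * p ^ e1 * p ^ e3 dvd p ^ (c + e2) * int x * (int x + int y)"
        using d1 d3 by (intro mult_dvd_mono) auto
      thus ?thesis by (simp add: power_add mult_ac)
    qed
    ultimately have "p ^ (c + e1 + e2 + e3) dvd poly P (int x) - poly P 0" by (rule dvd_trans[rotated])
    thus ?thesis using tau unfolding P_def \<epsilon>_def by simp
  next
    case False
    hence em: "\<epsilon> = -1" and yodd: "odd y" using eps by (auto simp: neg_one_even_power)
    have "odd (nat (p - 1))" using em unfolding \<epsilon>_def by (cases "even (nat (p - 1))") auto
    hence "even p" using p2 by (simp add: even_nat_iff)
    hence "\<not> p > 2" using prime_odd_int[OF p] by auto
    hence p2': "p = 2" using p2 by auto
    have e20: "e2 = 0" using pow_dvd_odd[of "int y" e2] yodd d2 p2' by simp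
    show ?thesis
    proof (cases "even x")
      case True
      have tau: "\<epsilon> ^ (x * y) = 1" using True em by simp
      have "odd (int x + int y)" using True yodd by simp
      hence e30: "e3 = 0" using pow_dvd_odd d3 p2' by blast
      have "p ^ c * (int x - 0) dvd poly P (int x) - poly P 0" by (rule flat_eval1[OF fl0])
      moreover have "p ^ (c + e1) dvd p ^ c * (int x - 0)"
        using d1 by (simp add: power_add mult_dvd_mono)
      ultimately have "p ^ (c + e1) dvd poly P (int x) - poly P 0" by (rule dvd_trans[rotated])
      thus ?thesis using tau e20 e30 unfolding P_def \<epsilon>_def by simp
    next
      case False
      have tau: "\<epsilon> ^ (x * y) = -1" using False yodd em by simp
      have e10: "e1 = 0" using pow_dvd_odd[of "int x" e1] False d1 p2' by simp
      have "p ^ c * (int x - (- int y)) dvd poly P (int x) - poly P (- int y)" by (rule flat_eval1[OF fl0])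
      moreover have "poly P (- int y) = - poly P 0" using refl em yodd by simp
      moreover have "p ^ (c + e3) dvd p ^ c * (int x + int y)"
        using d3 by (simp add: power_add mult_dvd_mono)
      ultimately have "p ^ (c + e3) dvd poly P (int x) + poly P 0" using dvd_trans by fastforce
      thus ?thesis using tau e20 e10 unfolding P_def \<epsilon>_def by (simp add: add.commute)
    qed
  qed
qed

lemma J_lemma:
  fixes p :: int and x y :: nat
  assumes p: "prime p" and c: "1 \<le> c" "int c < p" and base: "flat (p ^ c) (uP p)"
    and d1: "p ^ e1 dvd int x" and d2: "p ^ e2 dvd int y" and d3: "p ^ e3 dvd int x + int y"
  shows "p ^ (c + e1 + e2 + e3) dvd ff p (x + y) - ((-1) ^ nat (p - 1)) ^ (x * y) * ff p x * ff p y"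
proof (cases "x = 0 \<or> y = 0")
  case True thus ?thesis by (auto simp: ff_0)
next
  case False
  have "p ^ (c + e1 + e2 + e3) dvd ff p x * (poly (PP p y) (int x) - ((-1) ^ nat (p - 1)) ^ (x * y) * poly (PP p y) 0)"
    using J_core[OF assms] False by simp
  thus ?thesis unfolding ff_add ff_def[of p y] by (simp add: algebra_simps)
qed

lemma fact_add_prod: "fact (m + k) = fact m * (\<Prod>i\<in>{1..k}. of_nat (m + i) :: int)"
proof (induction k)
  case 0 thus ?case by simp
next
  case (Suc k)
  have "{1..Suc k} = insert (Suc k) {1..k}" by auto
  thus ?case using Suc by (simp add: algebra_simps)
qed

lemma fact_p_mult:
  fixes p :: int
  assumes p2: "p \<ge> 2"
  shows "fact (nat p * n) = p ^ n * fact n * ff p n"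
proof (induction n)
  case 0 thus ?case by (simp add: ff_0)
next
  case (Suc n)
  have ffS: "ff p (Suc n) = ff p n * poly (uP p) (int n)"
    unfolding ff_def poly_PP by simp
  have "(\<Prod>i\<in>{1..nat p}. of_nat (nat p * n + i) :: int) = (\<Prod>i\<in>{1..p}. p * int n + i)"
    by (rule prod.reindex_bij_witness[where i = "\<lambda>i. nat i" and j = "\<lambda>i. int i"]) (use p2 in auto)
  also have "\<dots> = (p * int n + p) * (\<Prod>i\<in>{1..p-1}. p * int n + i)"
  proof -
    have "{1..p} = insert p {1..p-1}" using p2 by auto
    thus ?thesis by simp
  qed
  also have "(\<Prod>i\<in>{1..p-1}. p * int n + i) = poly (uP p) (int n)"
    unfolding poly_uP by (simp add: add.commute)
  finally have pr: "(\<Prod>i\<in>{1..nat p}. of_nat (nat p * n + i) :: int) = p * (int n + 1) * poly (uP p) (int n)"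
    by (simp add: algebra_simps)
  have "fact (nat p * Suc n) = (fact (nat p * n + nat p) :: int)" by (simp add: algebra_simps)
  also have "\<dots> = fact (nat p * n) * (\<Prod>i\<in>{1..nat p}. of_nat (nat p * n + i))" by (rule fact_add_prod)
  also have "\<dots> = p ^ Suc n * fact (Suc n) * ff p (Suc n)"
    unfolding pr Suc ffS by (simp add: algebra_simps)
  finally show ?case .
qed

lemma F2:
  fixes p :: int
  assumes p2: "p \<ge> 2" and ba: "b \<le> a"
  shows "int (nat p * a choose (nat p * b)) * ff p b * ff p (a - b) = int (a choose b) * ff p a"
proof -
  have f1: "fact (nat p * b) * fact (nat p * a - nat p * b) * int (nat p * a choose (nat p * b)) = fact (nat p * a)"
  proof -
    have "nat p * b \<le> nat p * a" using ba by simp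
    from binomial_fact_lemma[OF this] show ?thesis by (metis of_nat_fact of_nat_mult)
  qed
  have f2: "fact b * fact (a - b) * int (a choose b) = fact a"
    using binomial_fact_lemma[OF ba] by (metis of_nat_fact of_nat_mult)
  have e: "nat p * a - nat p * b = nat p * (a - b)" by (simp add: diff_mult_distrib2)
  have "(p ^ a * fact b * fact (a - b)) * (int (nat p * a choose (nat p * b)) * ff p b * ff p (a - b))
      = (p ^ a * fact b * fact (a - b)) * (int (a choose b) * ff p a)"
  proof -
    have "p ^ a = p ^ b * p ^ (a - b)" using ba by (simp add: power_add[symmetric])
    hence "(p ^ a * fact b * fact (a - b)) * (int (nat p * a choose (nat p * b)) * ff p b * ff p (a - b))
        = fact (nat p * b) * fact (nat p * (a - b)) * int (nat p * a choose (nat p * b))"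
      using fact_p_mult[OF p2, of b] fact_p_mult[OF p2, of "a - b"] by (simp add: ac_simps)
    also have "\<dots> = fact (nat p * a)" using f1 e by simp
    also have "\<dots> = p ^ a * fact a * ff p a" by (rule fact_p_mult[OF p2])
    also have "\<dots> = (p ^ a * fact b * fact (a - b)) * (int (a choose b) * ff p a)"
      using f2 by (simp add: algebra_simps)
    finally show ?thesis .
  qed
  moreover have "p ^ a * fact b * fact (a - b) \<noteq> (0::int)" using p2 by simp
  ultimately show ?thesis by (simp only: mult_cancel_left) blast
qed

lemma zb_pos: "0 \<le> b \<Longrightarrow> b \<le> a \<Longrightarrow> zbinom a b = int (nat a choose nat b)"
  unfolding zbinom_def by simp

lemma zb_zero1: "0 \<le> a \<Longrightarrow> b < 0 \<or> a < b \<Longrightarrow> zbinom a b = 0"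
  unfolding zbinom_def by auto

lemma zb_neg1: "a < 0 \<Longrightarrow> 0 \<le> b \<Longrightarrow> zbinom a b = (-1) ^ nat b * int (nat (b - a - 1) choose nat b)"
  unfolding zbinom_def by simp

lemma zb_neg2: "a < 0 \<Longrightarrow> b \<le> a \<Longrightarrow> zbinom a b = (-1) ^ nat (a - b) * int (nat (- b - 1) choose nat (a - b))"
  unfolding zbinom_def by simp

lemma zb_zero2: "a < 0 \<Longrightarrow> a < b \<Longrightarrow> b < 0 \<Longrightarrow> zbinom a b = 0"
  unfolding zbinom_def by simp

lemma zbinom_sym: "zbinom a b = zbinom a (a - b)"
proof (cases "0 \<le> a")
  case True
  show ?thesis
  proof (cases "0 \<le> b \<and> b \<le> a")
    case True
    hence "nat (a - b) = nat a - nat b" by (simp add: nat_diff_distrib)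
    moreover have "nat b \<le> nat a" using True by (intro nat_mono) auto
    ultimately show ?thesis using True \<open>0 \<le> a\<close> binomial_symmetric[of "nat b" "nat a"] by (simp add: zb_pos)
  next
    case False thus ?thesis using \<open>0 \<le> a\<close> by (auto simp: zb_zero1)
  qed
next
  case False
  hence a: "a < 0" by simp
  consider "0 \<le> b" | "b \<le> a" | "a < b \<and> b < 0" by linarith
  thus ?thesis
  proof cases
    case 1 thus ?thesis using a by (simp add: zb_neg1 zb_neg2)
  next
    case 2 thus ?thesis using a by (simp add: zb_neg1 zb_neg2)
  next
    case 3 thus ?thesis using a by (simp add: zb_zero2)
  qed
qed

lemma nat_absorb: "Suc k * (n choose Suc k) = (n - k) * (n choose k)"
  using binomial_absorption[of k n] binomial_absorb_comp[of n k] by simp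

lemma zbinom_absorb: "b * zbinom a b = a * zbinom (a - 1) (b - 1)"
proof (cases "0 \<le> a")
  case True
  show ?thesis
  proof (cases "1 \<le> b \<and> b \<le> a")
    case True
    define k where "k = nat (b - 1)"
    define n where "n = nat (a - 1)"
    have kn: "b = int (Suc k)" "a = int (Suc n)" "k \<le> n" using True unfolding k_def n_def by auto
    have "int (Suc k) * int (Suc n choose Suc k) = int (Suc n) * int (n choose k)"
      using Suc_times_binomial[of k n] by (metis of_nat_mult)
    moreover have "zbinom a b = int (Suc n choose Suc k)" using kn by (simp add: zb_pos del: of_nat_Suc)
    moreover have "zbinom (a - 1) (b - 1) = int (n choose k)" using kn by (simp add: zb_pos)
    ultimately show ?thesis using kn by (simp only:)
  next
    case False
    hence "b \<le> 0 \<or> a < b" by auto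
    thus ?thesis
    proof
      assume "b \<le> 0"
      thus ?thesis using \<open>0 \<le> a\<close> by (cases "b = 0"; cases "a = 0") (auto simp: zb_zero1)
    next
      assume "a < b"
      thus ?thesis using \<open>0 \<le> a\<close> by (cases "a = 0") (auto simp: zb_zero1)
    qed
  qed
next
  case False
  hence a: "a < 0" by simp
  consider "1 \<le> b" | "b = 0" | "b < 0 \<and> b \<le> a" | "a < b \<and> b < 0" by linarith
  thus ?thesis
  proof cases
    case 1
    define k where "k = nat (b - 1)"
    define N where "N = nat (b - a - 1)"
    have b: "b = int (Suc k)" using 1 unfolding k_def by simp
    have N: "nat (b - 1 - (a - 1) - 1) = N" unfolding N_def by simp
    have kN: "N - k = nat (- a)" unfolding N_def k_def using a 1 by simp
    have "Suc k * (N choose Suc k) = (N - k) * (N choose k)" by (rule nat_absorb)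
    hence "int (Suc k * (N choose Suc k)) = int ((N - k) * (N choose k))" by simp
    hence e: "int (Suc k) * int (N choose Suc k) = (- a) * int (N choose k)"
      using kN a by (simp add: algebra_simps)
    have nb: "nat b = Suc k" using b by simp
    have "zbinom a b = (-1) ^ nat b * int (nat (b - a - 1) choose nat b)" using a 1 by (simp add: zb_neg1)
    hence zab: "zbinom a b = (-1) ^ Suc k * int (N choose Suc k)" unfolding nb N_def .
    have "b * zbinom a b = b * ((-1) ^ Suc k * int (N choose Suc k))" by (simp only: zab)
    also have "\<dots> = (-1) ^ Suc k * (int (Suc k) * int (N choose Suc k))" using b by (simp only: mult.left_commute)
    also have "\<dots> = a * ((-1) ^ k * int (N choose k))" using e by simp
    also have "(-1) ^ k * int (N choose k) = zbinom (a - 1) (b - 1)"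
      using a 1 N by (simp add: zb_neg1 k_def)
    finally show ?thesis .
  next
    case 2
    thus ?thesis using a by (simp add: zb_zero2)
  next
    case 3
    define n where "n = nat (- b)"
    define k where "k = nat (a - b)"
    have "(n - k) * (n choose k) = n * ((n - 1) choose k)" by (rule binomial_absorb_comp)
    hence e: "int (n - k) * int (n choose k) = int n * int ((n - 1) choose k)" by (metis of_nat_mult)
    have nk: "int (n - k) = - a" "int n = - b" using 3 a unfolding n_def k_def by auto
    have "b * zbinom a b = b * ((-1) ^ k * int ((n - 1) choose k))"
      using 3 a by (simp add: zb_neg2 n_def k_def nat_diff_distrib)
    also have "\<dots> = a * ((-1) ^ k * int (n choose k))" using e nk by (simp add: algebra_simps)
    also have "(-1) ^ k * int (n choose k) = zbinom (a - 1) (b - 1)"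
      using 3 a by (simp add: zb_neg2 n_def k_def)
    finally show ?thesis .
  next
    case 4 thus ?thesis using a by (simp add: zb_zero2)
  qed
qed

definition zsign :: "int \<Rightarrow> int \<Rightarrow> int \<Rightarrow> int" where
  "zsign p a b = (if odd p \<or> even (b * (a - b)) then 1 else -1)"

lemma eps_val: "(p::int) \<ge> 2 \<Longrightarrow> (-1::int) ^ nat (p - 1) = (if odd p then 1 else -1)"
proof -
  assume "p \<ge> 2"
  hence "even (nat (p - 1)) \<longleftrightarrow> odd p" by (simp add: even_nat_iff)
  thus ?thesis by auto
qed

lemma ff_prod_coprime: "prime p \<Longrightarrow> \<not> p dvd ff p x * ff p y"
  using ff_coprime prime_dvd_mult_iff by blast

lemma Z_pos:
  fixes p a b :: int
  assumes p: "prime p" and c: "1 \<le> c" "int c < p" and base: "flat (p ^ c) (uP p)"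
    and b: "0 \<le> b" "b \<le> a"
  shows "\<exists>N D. zbinom (p * a) (p * b) * D = zbinom a b * N \<and> \<not> p dvd D \<and>
    (\<forall>e1 e2 e3. p ^ e1 dvd a \<longrightarrow> p ^ e2 dvd b \<longrightarrow> p ^ e3 dvd (a - b) \<longrightarrow>
        p ^ (c + e1 + e2 + e3) dvd N - zsign p a b * D)"
proof -
  have p2: "p \<ge> 2" using p prime_ge_2_int by blast
  define x where "x = nat b"
  define y where "y = nat (a - b)"
  have xy: "int x = b" "int y = a - b" "nat a = x + y" using b unfolding x_def y_def by auto
  have z1: "zbinom (p * a) (p * b) = int (nat p * (x + y) choose (nat p * x))"
  proof -
    have "zbinom (p * a) (p * b) = int (nat (p * a) choose nat (p * b))"
      using b p2 by (intro zb_pos) (auto simp: mult_left_mono)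
    also have "nat (p * a) = nat p * (x + y)" using xy p2 b by (simp add: nat_mult_distrib)
    also have "nat (p * b) = nat p * x" using p2 b unfolding x_def by (simp add: nat_mult_distrib)
    finally show ?thesis .
  qed
  have z2: "zbinom a b = int ((x + y) choose x)"
  proof -
    have "zbinom a b = int (nat a choose nat b)" using b by (intro zb_pos)
    also have "nat a = x + y" by (rule xy(3))
    also have "nat b = x" unfolding x_def ..
    finally show ?thesis .
  qed
  have f2: "int (nat p * (x + y) choose (nat p * x)) * ff p x * ff p y = int ((x + y) choose x) * ff p (x + y)"
    using F2[OF p2, of x "x + y"] by simp
  show ?thesis
  proof (intro exI conjI allI impI)
    show "zbinom (p * a) (p * b) * (ff p x * ff p y) = zbinom a b * ff p (x + y)"
      using f2 z1 z2 by (simp add: mult.assoc)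
    show "\<not> p dvd ff p x * ff p y" by (rule ff_prod_coprime[OF p])
    fix e1 e2 e3 assume d: "p ^ e1 dvd a" "p ^ e2 dvd b" "p ^ e3 dvd (a - b)"
    have J: "p ^ (c + e2 + e3 + e1) dvd ff p (x + y) - ((-1) ^ nat (p - 1)) ^ (x * y) * ff p x * ff p y"
      by (rule J_lemma[OF p c base]) (use d xy in auto)
    have s: "((-1) ^ nat (p - 1)) ^ (x * y) = zsign p a b"
    proof (cases "odd p")
      case True thus ?thesis using p2 by (simp add: eps_val zsign_def)
    next
      case False
      have "b * (a - b) = int (x * y)" using xy by simp
      hence ev: "even (b * (a - b)) \<longleftrightarrow> even (x * y)" by simp
      show ?thesis using False p2 ev by (cases "even (x * y)") (auto simp: eps_val zsign_def)
    qed
    show "p ^ (c + e1 + e2 + e3) dvd ff p (x + y) - zsign p a b * (ff p x * ff p y)"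
      using J s by (simp add: ac_simps)
  qed
qed

lemma F2neg:
  fixes p :: int and x y :: nat
  assumes p2: "p \<ge> 2" and m: "0 < x + y"
  shows "int ((nat p * (x + y) - 1) choose (nat p * x)) * ff p x * ff p y = int ((x + y - 1) choose x) * ff p (x + y)"
proof -
  define m where "m = x + y"
  define q where "q = nat p"
  have q: "q \<ge> 2" using p2 unfolding q_def by simp
  have f2: "int (q * m choose (q * x)) * ff p x * ff p y = int (m choose x) * ff p m"
    using F2[OF p2, of x m] unfolding m_def q_def by simp
  have a1: "(q * m - q * x) * (q * m choose (q * x)) = q * m * ((q * m - 1) choose (q * x))"
    by (rule binomial_absorb_comp)
  have a2: "(m - x) * (m choose x) = m * ((m - 1) choose x)" by (rule binomial_absorb_comp)
  have e1: "q * m - q * x = q * y" "m - x = y" unfolding m_def by (auto simp: algebra_simps)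
  have a1': "q * y * (q * m choose (q * x)) = q * m * ((q * m - 1) choose (q * x))" using a1 e1 by simp
  have A1: "int (q * y) * int (q * m choose (q * x)) = int (q * m) * int ((q * m - 1) choose (q * x))"
    using arg_cong[OF a1', of int] by (simp only: of_nat_mult)
  have a2': "y * (m choose x) = m * ((m - 1) choose x)" using a2 e1 by simp
  have A2: "int y * int (m choose x) = int m * int ((m - 1) choose x)"
    using arg_cong[OF a2', of int] by (simp only: of_nat_mult)
  have "int (q * m) * (int ((q * m - 1) choose (q * x)) * ff p x * ff p y)
      = (int (q * m) * int ((q * m - 1) choose (q * x))) * (ff p x * ff p y)" by (simp only: mult.assoc)
  also have "\<dots> = int (q * y) * (int (q * m choose (q * x)) * ff p x * ff p y)" by (simp only: A1[symmetric] mult.assoc)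
  also have "\<dots> = int (q * y) * (int (m choose x) * ff p m)" using f2 by simp
  also have "\<dots> = int q * (int y * int (m choose x)) * ff p m" by (simp only: of_nat_mult mult.assoc)
  also have "\<dots> = int q * (int m * int ((m - 1) choose x)) * ff p m" by (simp only: A2)
  also have "\<dots> = int (q * m) * (int ((m - 1) choose x) * ff p m)" by (simp only: of_nat_mult mult.assoc)
  finally have "int (q * m) * (int ((q * m - 1) choose (q * x)) * ff p x * ff p y) = int (q * m) * (int ((m - 1) choose x) * ff p m)" .
  moreover have "q * m \<noteq> 0" using q m unfolding m_def by simp
  hence "int (q * m) \<noteq> 0" by linarith
  ultimately show ?thesis unfolding m_def q_def by simp
qed

lemma Z_negpos:
  fixes p a b :: int
  assumes p: "prime p" and c: "1 \<le> c" "int c < p" and base: "flat (p ^ c) (uP p)"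
    and ab: "a < 0" "0 \<le> b"
  shows "\<exists>N D. zbinom (p * a) (p * b) * D = zbinom a b * N \<and> \<not> p dvd D \<and>
    (\<forall>e1 e2 e3. p ^ e1 dvd a \<longrightarrow> p ^ e2 dvd b \<longrightarrow> p ^ e3 dvd (a - b) \<longrightarrow>
        p ^ (c + e1 + e2 + e3) dvd N - zsign p a b * D)"
proof -
  have p2: "p \<ge> 2" using p prime_ge_2_int by blast
  define x where "x = nat b"
  define y where "y = nat (- a)"
  define q where "q = nat p"
  have xy: "int x = b" "int y = - a" "0 < x + y" using ab unfolding x_def y_def by auto
  have z1: "zbinom (p * a) (p * b) = (-1) ^ (q * x) * int ((q * (x + y) - 1) choose (q * x))"
  proof -
    have pa: "p * a < 0" using ab p2 by (simp add: mult_pos_neg)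
    have pb: "0 \<le> p * b" using ab p2 by simp
    have "zbinom (p * a) (p * b) = (-1) ^ nat (p * b) * int (nat (p * b - p * a - 1) choose nat (p * b))"
      by (rule zb_neg1[OF pa pb])
    also have "nat (p * b) = q * x" using p2 ab unfolding q_def x_def by (simp add: nat_mult_distrib)
    also have "nat (p * b - p * a - 1) = q * (x + y) - 1"
    proof -
      have h1: "q * (x + y) \<ge> 1"
      proof -
        have "q \<ge> 1" "x + y \<ge> 1" using xy p2 unfolding q_def by auto
        thus ?thesis by (metis mult_le_mono nat_mult_1)
      qed
      have "int (q * (x + y) - 1) = int q * (int x + int y) - 1" using h1 by (simp add: of_nat_diff)
      also have "\<dots> = p * b - p * a - 1" using xy p2 unfolding q_def by (simp add: algebra_simps)
      finally have "p * b - p * a - 1 = int (q * (x + y) - 1)" ..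
      thus ?thesis by (simp only: nat_int)
    qed
    finally show ?thesis .
  qed
  have z2: "zbinom a b = (-1) ^ x * int ((x + y - 1) choose x)"
  proof -
    have "zbinom a b = (-1) ^ nat b * int (nat (b - a - 1) choose nat b)" by (rule zb_neg1[OF ab])
    also have "nat b = x" unfolding x_def ..
    also have "nat (b - a - 1) = x + y - 1" using xy by (simp add: nat_diff_distrib)
    finally show ?thesis .
  qed
  have f2: "int ((q * (x + y) - 1) choose (q * x)) * ff p x * ff p y = int ((x + y - 1) choose x) * ff p (x + y)"
    unfolding q_def by (rule F2neg[OF p2 xy(3)])
  define \<sigma> :: int where "\<sigma> = (-1) ^ (q * x + x)"
  have \<sigma>2: "\<sigma> * \<sigma> = 1" unfolding \<sigma>_def by (simp add: power_add[symmetric] power_mult_distrib[symmetric] flip: power_add)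
  show ?thesis
  proof (intro exI conjI allI impI)
    show "zbinom (p * a) (p * b) * (ff p x * ff p y) = zbinom a b * (\<sigma> * ff p (x + y))"
    proof -
      have "zbinom (p * a) (p * b) * (ff p x * ff p y) = (-1) ^ (q * x) * (int ((x + y - 1) choose x) * ff p (x + y))"
        using z1 f2 by (simp add: ac_simps)
      moreover have "zbinom a b * (\<sigma> * ff p (x + y)) = ((-1) ^ x * (-1) ^ x) * (-1) ^ (q * x) * (int ((x + y - 1) choose x) * ff p (x + y))"
        using z2 unfolding \<sigma>_def by (simp add: power_add ac_simps)
      moreover have "((-1::int) ^ x * (-1) ^ x) = 1" by (simp flip: power_add)
      ultimately show ?thesis by (metis mult_1_left)
    qed
    show "\<not> p dvd ff p x * ff p y" by (rule ff_prod_coprime[OF p])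
    fix e1 e2 e3 assume d: "p ^ e1 dvd a" "p ^ e2 dvd b" "p ^ e3 dvd (a - b)"
    have J: "p ^ (c + e2 + e1 + e3) dvd ff p (x + y) - ((-1) ^ nat (p - 1)) ^ (x * y) * ff p x * ff p y"
    proof (rule J_lemma[OF p c base])
      show "p ^ e2 dvd int x" using d xy by simp
      show "p ^ e1 dvd int y" using d xy by simp
      have "int x + int y = - (a - b)" using xy by simp
      moreover have "p ^ e3 dvd - (a - b)" using d(3) by (rule dvd_minus_iff[THEN iffD2])
      ultimately show "p ^ e3 dvd int x + int y" by simp
    qed
    have s: "zsign p a b = \<sigma> * ((-1) ^ nat (p - 1)) ^ (x * y)"
    proof (cases "odd p")
      case True
      hence "odd q" using p2 unfolding q_def by (simp add: even_nat_iff)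
      hence "even (q * x + x)" by simp
      thus ?thesis using True p2 unfolding \<sigma>_def by (simp add: eps_val zsign_def)
    next
      case False
      hence "even q" using p2 unfolding q_def by (simp add: even_nat_iff)
      have "b * (a - b) = - int (x * x + x * y)" using xy by (simp add: algebra_simps)
      hence ev0: "even (b * (a - b)) \<longleftrightarrow> even (x * x + x * y)"
        by (metis even_minus even_of_nat_iff)
      have "even (x * x + x * y) \<longleftrightarrow> even (x + x * y)" by (cases "even x") auto
      with ev0 have ev: "even (b * (a - b)) \<longleftrightarrow> even (x + x * y)" by simp
      have ev2: "even (q * x + x + x * y) \<longleftrightarrow> even (x + x * y)" using \<open>even q\<close> by simp
      have "\<sigma> * ((-1) ^ nat (p - 1)) ^ (x * y) = (-1) ^ (q * x + x + x * y)"
        using False p2 unfolding \<sigma>_def by (simp add: eps_val power_add)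
      thus ?thesis using ev ev2 False unfolding zsign_def
        by (cases "even (x + x * y)") auto
    qed
    have "\<sigma> * ff p (x + y) - zsign p a b * (ff p x * ff p y)
        = \<sigma> * (ff p (x + y) - ((-1) ^ nat (p - 1)) ^ (x * y) * ff p x * ff p y)"
      using s \<sigma>2 by (simp add: algebra_simps)
    moreover have "p ^ (c + e1 + e2 + e3) dvd \<sigma> * (ff p (x + y) - ((-1) ^ nat (p - 1)) ^ (x * y) * ff p x * ff p y)"
      using J by (simp add: ac_simps)
    ultimately show "p ^ (c + e1 + e2 + e3) dvd \<sigma> * ff p (x + y) - zsign p a b * (ff p x * ff p y)" by simp
  qed
qed

definition Zprop :: "int \<Rightarrow> nat \<Rightarrow> int \<Rightarrow> int \<Rightarrow> bool" where
  "Zprop p c a b \<longleftrightarrow> (\<exists>N D. zbinom (p * a) (p * b) * D = zbinom a b * N \<and> \<not> p dvd D \<and>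
    (\<forall>e1 e2 e3. p ^ e1 dvd a \<longrightarrow> p ^ e2 dvd b \<longrightarrow> p ^ e3 dvd (a - b) \<longrightarrow>
        p ^ (c + e1 + e2 + e3) dvd N - zsign p a b * D))"

lemma Z_zero:
  assumes "zbinom a b = 0" "zbinom (p * a) (p * b) = 0" "prime p"
  shows "Zprop p c a b"
  unfolding Zprop_def
  by (rule exI[of _ "zsign p a b"], rule exI[of _ 1]) (use assms in \<open>auto simp: prime_gt_1_int\<close>)

lemma zsign_sym: "zsign p a (a - b) = zsign p a b"
  unfolding zsign_def by (simp add: mult.commute)

lemma Z_main:
  fixes p a b :: int
  assumes p: "prime p" and c: "1 \<le> c" "int c < p" and base: "flat (p ^ c) (uP p)"
  shows "Zprop p c a b"
proof -
  have p2: "p \<ge> 2" using p prime_ge_2_int by blast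
  show ?thesis
  proof (cases "0 \<le> a")
    case True
    show ?thesis
    proof (cases "0 \<le> b \<and> b \<le> a")
      case True
      thus ?thesis using Z_pos[OF p c base] unfolding Zprop_def by blast
    next
      case False
      have "zbinom a b = 0" using False \<open>0 \<le> a\<close> by (intro zb_zero1) auto
      moreover have "zbinom (p * a) (p * b) = 0"
      proof (rule zb_zero1)
        show "0 \<le> p * a" using \<open>0 \<le> a\<close> p2 by simp
        show "p * b < 0 \<or> p * a < p * b" using False p2 by (auto simp: mult_less_cancel_left zero_less_mult_iff mult_less_0_iff)
      qed
      ultimately show ?thesis using Z_zero p by blast
    qed
  next
    case False
    hence a: "a < 0" by simp
    have pa: "p * a < 0" using a p2 by (simp add: mult_pos_neg)
    consider "0 \<le> b" | "b \<le> a" | "a < b \<and> b < 0" by linarith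
    thus ?thesis
    proof cases
      case 1 thus ?thesis using Z_negpos[OF p c base a] unfolding Zprop_def by blast
    next
      case 2
      hence "0 \<le> a - b" by simp
      from Z_negpos[OF p c base a this] obtain N D where ND:
        "zbinom (p * a) (p * (a - b)) * D = zbinom a (a - b) * N" "\<not> p dvd D"
        "\<forall>e1 e2 e3. p ^ e1 dvd a \<longrightarrow> p ^ e2 dvd (a - b) \<longrightarrow> p ^ e3 dvd (a - (a - b)) \<longrightarrow>
          p ^ (c + e1 + e2 + e3) dvd N - zsign p a (a - b) * D" by blast
      have s1: "zbinom (p * a) (p * (a - b)) = zbinom (p * a) (p * b)"
        using zbinom_sym[of "p * a" "p * b"] by (simp add: algebra_simps)
      have s2: "zbinom a (a - b) = zbinom a b" using zbinom_sym[of a b] by simp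
      show ?thesis unfolding Zprop_def
      proof (intro exI conjI allI impI)
        show "zbinom (p * a) (p * b) * D = zbinom a b * N" using ND(1) s1 s2 by simp
        show "\<not> p dvd D" by (rule ND(2))
        fix e1 e2 e3 assume d: "p ^ e1 dvd a" "p ^ e2 dvd b" "p ^ e3 dvd (a - b)"
        have "p ^ (c + e1 + e3 + e2) dvd N - zsign p a (a - b) * D" using ND(3) d by simp
        thus "p ^ (c + e1 + e2 + e3) dvd N - zsign p a b * D" by (simp add: zsign_sym ac_simps)
      qed
    next
      case 3
      have "zbinom a b = 0" using 3 a by (intro zb_zero2) auto
      moreover have "zbinom (p * a) (p * b) = 0"
        using 3 a p2 by (intro zb_zero2) (auto simp: mult_less_cancel_left mult_pos_neg)
      ultimately show ?thesis using Z_zero p by blast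
    qed
  qed
qed

definition blk :: "nat list \<Rightarrow> 'a list \<Rightarrow> nat \<Rightarrow> 'a list" where
  "blk lam ms j = take (lam ! j) (drop (sum_list (take j lam)) ms)"

definition fa :: "int list \<Rightarrow> int \<Rightarrow> nat \<Rightarrow> int" where
  "fa ms k i = sum_list (take (Suc i) ms) - int i * k"

definition fb :: "int list \<Rightarrow> int \<Rightarrow> nat \<Rightarrow> int" where
  "fb ms k i = ms ! i - k"

lemma sum_list_take_le: "sum_list (take n (xs :: nat list)) \<le> sum_list xs"
proof -
  have "sum_list xs = sum_list (take n xs) + sum_list (drop n xs)"
    by (metis append_take_drop_id sum_list_append)
  thus ?thesis by simp
qed

lemma length_blk:
  assumes "length ms = sum_list lam" "j < length lam"
  shows "length (blk lam ms j) = lam ! j"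
proof -
  have "sum_list (take (Suc j) lam) = sum_list (take j lam) + lam ! j"
    using assms(2) by (simp add: take_Suc_conv_app_nth)
  hence "sum_list (take j lam) + lam ! j \<le> sum_list lam" using sum_list_take_le[of "Suc j" lam] by simp
  thus ?thesis unfolding blk_def using assms(1) by simp
qed

lemma blk_map: "blk lam (map f ms) j = map f (blk lam ms j)"
  unfolding blk_def by (simp add: take_map drop_map)

lemma set_blk: "set (blk lam ms j) \<subseteq> set ms"
  unfolding blk_def by (meson in_set_takeD in_set_dropD subsetI)

lemma zmultinom_alt: "zmultinom ms k = (\<Prod>i<length ms. zbinom (fa ms k i) (fb ms k i))"
  unfolding zmultinom_def fa_def fb_def ..

lemma sum_list_mult_const: "sum_list (map (\<lambda>x. c * x) xs) = (c::int) * sum_list xs"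
  by (induction xs) (auto simp: algebra_simps)

lemma zmultinom_scaled: "zmultinom (map (\<lambda>x. p * x) ms) (p * k) = (\<Prod>i<length ms. zbinom (p * fa ms k i) (p * fb ms k i))"
  unfolding zmultinom_def fa_def fb_def
  by (rule prod.cong) (auto simp: take_map sum_list_mult_const algebra_simps)

lemma A_lam_Q:
  assumes "length ms = sum_list lam"
  shows "A_lam lam ms k = (\<Prod>j<length lam. \<Prod>i<lam ! j. zbinom (fa (blk lam ms j) k i) (fb (blk lam ms j) k i))"
  unfolding A_lam_def blk_def[symmetric] zmultinom_alt
  by (rule prod.cong) (use length_blk[OF assms] in auto)

lemma A_lam_P:
  assumes "length ms = sum_list lam"
  shows "A_lam lam (map (\<lambda>x. p * x) ms) (p * k) = (\<Prod>j<length lam. \<Prod>i<lam ! j. zbinom (p * fa (blk lam ms j) k i) (p * fb (blk lam ms j) k i))"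
  unfolding A_lam_def blk_def[symmetric] blk_map zmultinom_scaled
  by (rule prod.cong) (use length_blk[OF assms] in auto)

lemma GL:
  fixes X Y s :: "'i \<Rightarrow> int"
  assumes "finite I" "\<And>i. i \<in> I \<Longrightarrow> \<exists>N D. X i * D = Y i * N \<and> \<not> p dvd D \<and> M dvd N - s i * D"
    and p: "prime p"
  shows "\<exists>N D. (\<Prod>i\<in>I. X i) * D = (\<Prod>i\<in>I. Y i) * N \<and> \<not> p dvd D \<and> M dvd N - (\<Prod>i\<in>I. s i) * D"
  using assms(1,2)
proof (induction I rule: finite_induct)
  case empty
  show ?case by (rule exI[of _ 1], rule exI[of _ 1]) (use p in \<open>auto simp: prime_gt_1_int\<close>)
next
  case (insert x F)
  obtain N D where ND: "(\<Prod>i\<in>F. X i) * D = (\<Prod>i\<in>F. Y i) * N" "\<not> p dvd D" "M dvd N - (\<Prod>i\<in>F. s i) * D"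
    using insert by auto
  obtain N1 D1 where ND1: "X x * D1 = Y x * N1" "\<not> p dvd D1" "M dvd N1 - s x * D1"
    using insert.prems by blast
  show ?case
  proof (intro exI conjI)
    show "(\<Prod>i\<in>insert x F. X i) * (D1 * D) = (\<Prod>i\<in>insert x F. Y i) * (N1 * N)"
      using insert.hyps ND(1) ND1(1) by (simp add: ac_simps)
    show "\<not> p dvd D1 * D" using ND(2) ND1(2) p by (simp add: prime_dvd_mult_iff)
    have "N1 * N - (\<Prod>i\<in>insert x F. s i) * (D1 * D) = N1 * (N - (\<Prod>i\<in>F. s i) * D) + (\<Prod>i\<in>F. s i) * D * (N1 - s x * D1)"
      using insert.hyps by (simp add: algebra_simps)
    thus "M dvd N1 * N - (\<Prod>i\<in>insert x F. s i) * (D1 * D)"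
      using ND(3) ND1(3) by simp
  qed
qed

lemma FIN:
  fixes p AP AQ N D \<sigma> :: int
  assumes p: "prime p" and eq: "AP * D = AQ * N" and D: "\<not> p dvd D"
    and c: "p ^ E dvd N - \<sigma> * D" and w: "p ^ w dvd AQ" and T: "T \<le> w + E"
    and sg: "\<sigma> = 1 \<or> (\<sigma> = -1 \<and> p ^ T dvd 2 * AQ)"
  shows "p ^ T dvd AP - AQ"
proof -
  have "D * (AP - AQ) = AQ * (N - \<sigma> * D) + (\<sigma> - 1) * AQ * D"
    using eq by (simp add: algebra_simps)
  moreover have "p ^ T dvd AQ * (N - \<sigma> * D)"
  proof -
    have "p ^ w * p ^ E dvd AQ * (N - \<sigma> * D)" using w c by (rule mult_dvd_mono)
    moreover have "p ^ T dvd p ^ w * p ^ E" using T by (simp add: le_imp_power_dvd flip: power_add)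
    ultimately show ?thesis using dvd_trans by blast
  qed
  moreover have "p ^ T dvd (\<sigma> - 1) * AQ * D"
    using sg by (auto simp: mult.assoc[symmetric])
  ultimately have "p ^ T dvd D * (AP - AQ)" by simp
  moreover have "coprime (p ^ T) D"
  proof -
    have "coprime p D" using p D by (rule prime_imp_coprime)
    thus ?thesis by simp
  qed
  ultimately show ?thesis by (simp add: coprime_dvd_mult_right_iff)
qed

lemma dvd_sum_list_all: "(\<And>x. x \<in> set xs \<Longrightarrow> d dvd x) \<Longrightarrow> (d::int) dvd sum_list xs"
  by (induction xs) auto

lemma fab_dvd:
  assumes all: "\<forall>x\<in>set bl. p ^ R dvd x" and t: "t \<le> R" and k: "p ^ t dvd (k::int)" and i: "i < length bl"
  shows "p ^ t dvd fa bl k i" "p ^ t dvd fb bl k i" "p ^ t dvd fa bl k i - fb bl k i"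
proof -
  have tR: "p ^ t dvd p ^ R" using t by (rule le_imp_power_dvd)
  have e: "p ^ t dvd x" if "x \<in> set bl" for x using all that tR dvd_trans by blast
  have s: "p ^ t dvd sum_list (take (Suc i) bl)"
    by (rule dvd_sum_list_all) (use e in \<open>auto dest: in_set_takeD\<close>)
  show a: "p ^ t dvd fa bl k i" unfolding fa_def using s k by simp
  show b: "p ^ t dvd fb bl k i" unfolding fb_def using e[of "bl ! i"] i k by simp
  show "p ^ t dvd fa bl k i - fb bl k i" using a b by simp
qed

lemma fa0: "0 < length bl \<Longrightarrow> fa bl k 0 = bl ! 0"
  unfolding fa_def by (cases bl) auto

lemma fab1: "1 < length bl \<Longrightarrow> fa bl k 1 - fb bl k 1 = bl ! 0"
  unfolding fa_def fb_def by (cases bl; cases "tl bl") auto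

lemma fb0: "fb bl k 0 = bl ! 0 - k" unfolding fb_def ..

lemma pow_cancel:
  fixes p b Z :: int
  assumes p: "prime p" and d: "p ^ (t + u) dvd b * Z" and bt: "p ^ t dvd b" and nb: "\<not> p ^ Suc t dvd b"
  shows "p ^ u dvd Z"
proof -
  obtain b' where b': "b = p ^ t * b'" using bt by (auto elim: dvdE)
  have "\<not> p dvd b'"
  proof
    assume "p dvd b'"
    hence "p ^ t * p dvd p ^ t * b'" by simp
    thus False using nb b' by (simp add: mult.commute)
  qed
  hence "coprime p b'" using p by (intro prime_imp_coprime)
  hence cop: "coprime (p ^ u) b'" by simp
  have "p ^ t * p ^ u dvd p ^ t * (b' * Z)" using d b' by (simp add: power_add mult.assoc)
  hence "p ^ u dvd b' * Z" using p by (simp add: prime_gt_0_int)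
  thus ?thesis using cop by (simp add: coprime_dvd_mult_right_iff)
qed

lemma first_factor:
  fixes p m k :: int
  assumes p: "prime p" and m: "p ^ R dvd m" and t: "t < R" and k: "p ^ t dvd k" and nk: "\<not> p ^ Suc t dvd k"
  shows "p ^ (R - t) dvd zbinom m (m - k)"
proof -
  have abs: "(m - k) * zbinom m (m - k) = m * zbinom (m - 1) (m - k - 1)" by (rule zbinom_absorb)
  have "p ^ (t + (R - t)) dvd (m - k) * zbinom m (m - k)"
    unfolding abs using t m by simp
  moreover have "p ^ t dvd m - k"
    using m k le_imp_power_dvd[of t R p] t dvd_trans by (meson dvd_diff less_imp_le)
  moreover have "\<not> p ^ Suc t dvd m - k"
  proof
    assume "p ^ Suc t dvd m - k"
    moreover have "p ^ Suc t dvd m" using m le_imp_power_dvd[of "Suc t" R p] t dvd_trans by (meson Suc_leI)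
    ultimately have "p ^ Suc t dvd m - (m - k)" by (rule dvd_diff[rotated])
    thus False using nk by simp
  qed
  ultimately show ?thesis by (rule pow_cancel[OF p])
qed

lemma first_factor_blk:
  fixes p k :: int
  assumes p: "prime p" and pos: "\<forall>x\<in>set lam. x > 0" and len: "length ms = sum_list lam"
    and allm: "\<forall>x\<in>set ms. p ^ R dvd x" and j: "j < length lam"
    and t: "t < R" "p ^ t dvd k" "\<not> p ^ Suc t dvd k"
  shows "p ^ (R - t) dvd (\<Prod>i<lam ! j. zbinom (fa (blk lam ms j) k i) (fb (blk lam ms j) k i))"
proof -
  define bl where "bl = blk lam ms j"
  have lb: "length bl = lam ! j" unfolding bl_def using length_blk[OF len j] .
  have lp: "0 < lam ! j" using pos j by auto
  have "bl ! 0 \<in> set ms" using set_blk[of lam ms j] nth_mem[of 0 bl] lb lp unfolding bl_def by auto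
  hence m: "p ^ R dvd bl ! 0" using allm by blast
  have "p ^ (R - t) dvd zbinom (bl ! 0) (bl ! 0 - k)" by (rule first_factor[OF p m t])
  also have "zbinom (bl ! 0) (bl ! 0 - k) = zbinom (fa bl k 0) (fb bl k 0)"
    using lb lp by (simp add: fa0 fb0)
  also have "\<dots> dvd (\<Prod>i<lam ! j. zbinom (fa bl k i) (fb bl k i))"
    using lp by (intro dvd_prodI) auto
  finally show ?thesis unfolding bl_def .
qed

lemma W_bound:
  fixes p k :: int
  assumes p: "prime p" and lam2: "length lam \<ge> 2" and pos: "\<forall>x\<in>set lam. x > 0"
    and len: "length ms = sum_list lam" and allm: "\<forall>x\<in>set ms. p ^ (r - 1) dvd x"
    and t: "t \<le> r - 1" "p ^ t dvd k" "t < r - 1 \<longrightarrow> \<not> p ^ Suc t dvd k"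
  shows "p ^ (2 * (r - 1 - t)) dvd A_lam lam ms k"
proof (cases "t < r - 1")
  case False
  hence "2 * (r - 1 - t) = 0" using t by simp
  thus ?thesis by simp
next
  case True
  define M where "M j = (\<Prod>i<lam ! j. zbinom (fa (blk lam ms j) k i) (fb (blk lam ms j) k i))" for j
  have d: "p ^ (r - 1 - t) dvd M j" if "j < length lam" for j
    unfolding M_def by (rule first_factor_blk[OF p pos len allm that True]) (use t True in auto)
  have d0: "p ^ (r - 1 - t) dvd M 0" using d[of 0] lam2 by (cases lam) auto
  have d1: "p ^ (r - 1 - t) dvd M 1" using d[of 1] lam2 by simp
  have "p ^ (r - 1 - t) * p ^ (r - 1 - t) dvd M 0 * M 1" using d0 d1 by (rule mult_dvd_mono)
  also have "M 0 * M 1 = (\<Prod>j\<in>{0, 1}. M j)" by simp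
  also have "\<dots> dvd (\<Prod>j<length lam. M j)" using lam2 by (intro prod_dvd_prod_subset) auto
  also have "\<dots> = A_lam lam ms k" unfolding M_def by (rule A_lam_Q[OF len, symmetric])
  finally show ?thesis by (simp add: power_add[symmetric] mult_2)
qed

lemma main_gen:
  fixes p k \<sigma> :: int and ms :: "int list"
  assumes p: "prime p" and c: "1 \<le> c" "int c < p" and base: "flat (p ^ c) (uP p)"
    and lam2: "length lam \<ge> 2" and pos: "\<forall>x\<in>set lam. x > 0"
    and len: "length ms = sum_list lam" and allm: "\<forall>x\<in>set ms. p ^ (r - 1) dvd x"
    and t: "t \<le> r - 1" "p ^ t dvd k" "t < r - 1 \<longrightarrow> \<not> p ^ Suc t dvd k"
    and Ecnd: "\<And>j i. j < length lam \<Longrightarrow> i < lam ! j \<Longrightarrow> \<exists>e1 e2 e3.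
        p ^ e1 dvd fa (blk lam ms j) k i \<and> p ^ e2 dvd fb (blk lam ms j) k i \<and>
        p ^ e3 dvd (fa (blk lam ms j) k i - fb (blk lam ms j) k i) \<and> E \<le> c + e1 + e2 + e3"
    and T: "T \<le> 2 * (r - 1 - t) + E"
    and \<sigma>def: "\<sigma> = (\<Prod>j<length lam. \<Prod>i<lam ! j. zsign p (fa (blk lam ms j) k i) (fb (blk lam ms j) k i))"
    and sg: "\<sigma> = 1 \<or> (\<sigma> = -1 \<and> p ^ T dvd 2 * A_lam lam ms k)"
  shows "p ^ T dvd A_lam lam (map (\<lambda>x. p * x) ms) (p * k) - A_lam lam ms k"
proof -
  have Zall: "\<exists>N D. zbinom (p * fa (blk lam ms j) k i) (p * fb (blk lam ms j) k i) * D
      = zbinom (fa (blk lam ms j) k i) (fb (blk lam ms j) k i) * N \<and> \<not> p dvd D \<and>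
      p ^ E dvd N - zsign p (fa (blk lam ms j) k i) (fb (blk lam ms j) k i) * D"
    if j: "j < length lam" and i: "i < lam ! j" for j i
  proof -
    obtain e1 e2 e3 where e: "p ^ e1 dvd fa (blk lam ms j) k i" "p ^ e2 dvd fb (blk lam ms j) k i"
        "p ^ e3 dvd (fa (blk lam ms j) k i - fb (blk lam ms j) k i)" "E \<le> c + e1 + e2 + e3"
      using Ecnd[OF j i] by blast
    obtain N D where ND: "zbinom (p * fa (blk lam ms j) k i) (p * fb (blk lam ms j) k i) * D
      = zbinom (fa (blk lam ms j) k i) (fb (blk lam ms j) k i) * N" "\<not> p dvd D"
      "p ^ (c + e1 + e2 + e3) dvd N - zsign p (fa (blk lam ms j) k i) (fb (blk lam ms j) k i) * D"
      using Z_main[OF p c base, of "fa (blk lam ms j) k i" "fb (blk lam ms j) k i"] e(1-3)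
      unfolding Zprop_def by blast
    have "p ^ E dvd p ^ (c + e1 + e2 + e3)" using e(4) by (rule le_imp_power_dvd)
    thus ?thesis using ND dvd_trans by blast
  qed
  have inner: "\<exists>N D. (\<Prod>i<lam ! j. zbinom (p * fa (blk lam ms j) k i) (p * fb (blk lam ms j) k i)) * D
      = (\<Prod>i<lam ! j. zbinom (fa (blk lam ms j) k i) (fb (blk lam ms j) k i)) * N \<and> \<not> p dvd D \<and>
      p ^ E dvd N - (\<Prod>i<lam ! j. zsign p (fa (blk lam ms j) k i) (fb (blk lam ms j) k i)) * D"
    if j: "j < length lam" for j
    by (rule GL[OF _ _ p]) (use Zall[OF j] in auto)
  define X where "X j = (\<Prod>i<lam ! j. zbinom (p * fa (blk lam ms j) k i) (p * fb (blk lam ms j) k i))" for j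
  define Y where "Y j = (\<Prod>i<lam ! j. zbinom (fa (blk lam ms j) k i) (fb (blk lam ms j) k i))" for j
  define S where "S j = (\<Prod>i<lam ! j. zsign p (fa (blk lam ms j) k i) (fb (blk lam ms j) k i))" for j
  have "\<exists>N D. (\<Prod>j<length lam. X j) * D = (\<Prod>j<length lam. Y j) * N \<and> \<not> p dvd D \<and> p ^ E dvd N - (\<Prod>j<length lam. S j) * D"
    by (rule GL[OF _ _ p]) (use inner in \<open>auto simp: X_def Y_def S_def\<close>)
  then obtain N D where ND: "A_lam lam (map (\<lambda>x. p * x) ms) (p * k) * D = A_lam lam ms k * N" "\<not> p dvd D"
    "p ^ E dvd N - \<sigma> * D"
    unfolding A_lam_P[OF len] A_lam_Q[OF len] \<sigma>def X_def Y_def S_def by blast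
  have w: "p ^ (2 * (r - 1 - t)) dvd A_lam lam ms k" by (rule W_bound[OF p lam2 pos len allm t])
  show ?thesis by (rule FIN[OF p ND(1) ND(2) ND(3) w T sg])
qed

lemma exists_t:
  fixes p k :: int
  shows "\<exists>t\<le>R. p ^ t dvd k \<and> (t < R \<longrightarrow> \<not> p ^ Suc t dvd k)"
proof -
  define S where "S = {t. t \<le> R \<and> p ^ t dvd k}"
  have fin: "finite S" unfolding S_def by auto
  have ne: "0 \<in> S" unfolding S_def by auto
  define t where "t = Max S"
  have tS: "t \<in> S" unfolding t_def using fin ne by (intro Max_in) auto
  have mx: "t' \<le> t" if "t' \<in> S" for t' unfolding t_def using fin that by auto
  show ?thesis
  proof (intro exI conjI impI)
    show "t \<le> R" "p ^ t dvd k" using tS unfolding S_def by auto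
    assume "t < R"
    show "\<not> p ^ Suc t dvd k"
    proof
      assume "p ^ Suc t dvd k"
      hence "Suc t \<in> S" using \<open>t < R\<close> unfolding S_def by auto
      thus False using mx by fastforce
    qed
  qed
qed

lemma zsign_odd: "odd p \<Longrightarrow> zsign p a b = 1"
  unfolding zsign_def by simp

lemma map_scale: "r \<ge> 1 \<Longrightarrow> map (\<lambda>x. p * x) (map (\<lambda>x. p ^ (r - 1) * x) ns) = map (\<lambda>x. (p::int) ^ r * x) ns"
  by (cases r) (auto simp: mult.assoc)

lemma ms_facts:
  assumes "length ns = sum_list lam"
  shows "length (map (\<lambda>x. p ^ (r - 1) * x) ns) = sum_list lam"
    "\<forall>x\<in>set (map (\<lambda>x. p ^ (r - 1) * x) ns). (p::int) ^ (r - 1) dvd x"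
  using assms by auto

lemma blk_entries:
  assumes "\<forall>x\<in>set ms. (p::int) ^ R dvd x"
  shows "\<forall>x\<in>set (blk lam ms j). p ^ R dvd x"
proof
  fix x assume "x \<in> set (blk lam ms j)"
  hence "x \<in> set ms" using set_blk[of lam ms j] by (rule subsetD[rotated])
  thus "p ^ R dvd x" using assms by blast
qed

lemma part_gen_odd:
  fixes p k :: int and ns :: "int list"
  assumes p: "prime p" and po: "odd p" and c: "1 \<le> c" "int c < p" and base: "flat (p ^ c) (uP p)"
    and lam2: "length lam \<ge> 2" and pos: "\<forall>x\<in>set lam. x > 0"
    and len: "length ns = sum_list lam" and r: "r \<ge> 1"
    and Ecnd: "\<And>t j i. t \<le> r - 1 \<Longrightarrow> p ^ t dvd k \<Longrightarrow> j < length lam \<Longrightarrow> i < lam ! j \<Longrightarrow> \<exists>e1 e2 e3.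
        p ^ e1 dvd fa (blk lam (map (\<lambda>x. p ^ (r - 1) * x) ns) j) k i \<and>
        p ^ e2 dvd fb (blk lam (map (\<lambda>x. p ^ (r - 1) * x) ns) j) k i \<and>
        p ^ e3 dvd (fa (blk lam (map (\<lambda>x. p ^ (r - 1) * x) ns) j) k i - fb (blk lam (map (\<lambda>x. p ^ (r - 1) * x) ns) j) k i)
        \<and> E t \<le> c + e1 + e2 + e3"
    and T: "\<And>t. t \<le> r - 1 \<Longrightarrow> T \<le> 2 * (r - 1 - t) + E t"
  shows "p ^ T dvd A_lam lam (map (\<lambda>x. p ^ r * x) ns) (p * k) - A_lam lam (map (\<lambda>x. p ^ (r - 1) * x) ns) k"
proof -
  define ms where "ms = map (\<lambda>x. p ^ (r - 1) * x) ns"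
  obtain t where t: "t \<le> r - 1" "p ^ t dvd k" "t < r - 1 \<longrightarrow> \<not> p ^ Suc t dvd k"
    using exists_t by blast
  have "p ^ T dvd A_lam lam (map (\<lambda>x. p * x) ms) (p * k) - A_lam lam ms k"
  proof (rule main_gen[OF p c base lam2 pos, where \<sigma> = 1])
    show "length ms = sum_list lam" "\<forall>x\<in>set ms. p ^ (r - 1) dvd x"
      unfolding ms_def using ms_facts[OF len] by auto
    show "t \<le> r - 1" "p ^ t dvd k" "t < r - 1 \<longrightarrow> \<not> p ^ Suc t dvd k" by (fact t)+
    show "\<And>j i. j < length lam \<Longrightarrow> i < lam ! j \<Longrightarrow> \<exists>e1 e2 e3.
        p ^ e1 dvd fa (blk lam ms j) k i \<and> p ^ e2 dvd fb (blk lam ms j) k i \<and>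
        p ^ e3 dvd (fa (blk lam ms j) k i - fb (blk lam ms j) k i) \<and> E t \<le> c + e1 + e2 + e3"
      unfolding ms_def by (rule Ecnd[OF t(1,2)])
    show "T \<le> 2 * (r - 1 - t) + E t" by (rule T[OF t(1)])
    show "1 = (\<Prod>j<length lam. \<Prod>i<lam ! j. zsign p (fa (blk lam ms j) k i) (fb (blk lam ms j) k i))"
      using po by (simp add: zsign_odd)
    show "(1::int) = 1 \<or> (1 = -1 \<and> p ^ T dvd 2 * A_lam lam ms k)" by simp
  qed
  moreover have "map (\<lambda>x. p * x) ms = map (\<lambda>x. p ^ r * x) ns" unfolding ms_def by (rule map_scale[OF r])
  ultimately show ?thesis unfolding ms_def by (simp only:)
qed

lemma blk_len_entries:
  fixes p :: int
  assumes len: "length ns = sum_list lam" and j: "j < length lam"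
  shows "length (blk lam (map (\<lambda>x. p ^ (r - 1) * x) ns) j) = lam ! j"
    "\<forall>x\<in>set (blk lam (map (\<lambda>x. p ^ (r - 1) * x) ns) j). p ^ (r - 1) dvd x"
proof -
  show "length (blk lam (map (\<lambda>x. p ^ (r - 1) * x) ns) j) = lam ! j"
    using length_blk[of "map (\<lambda>x. p ^ (r - 1) * x) ns" lam j] len j by simp
  show "\<forall>x\<in>set (blk lam (map (\<lambda>x. p ^ (r - 1) * x) ns) j). p ^ (r - 1) dvd x"
    by (rule blk_entries) auto
qed

lemma part_b:
  fixes p k :: int and ns :: "int list"
  assumes p: "prime p" and p5: "p \<ge> 5" and lam2: "length lam \<ge> 2" and pos: "\<forall>x\<in>set lam. x > 0"
    and mx: "Max (set lam) \<le> 2" and len: "length ns = sum_list lam" and r: "r \<ge> 1"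
  shows "p ^ (3 * r) dvd A_lam lam (map (\<lambda>x. p ^ r * x) ns) (p * k) - A_lam lam (map (\<lambda>x. p ^ (r - 1) * x) ns) k"
proof (rule part_gen_odd[OF p _ _ _ flat_uP_3[OF p p5] lam2 pos len r, where E = "\<lambda>t. 3 + (r - 1) + 2 * t"])
  show "odd p" using p p5 by (intro prime_odd_int) auto
  show "1 \<le> (3::nat)" by simp
  show "int 3 < p" using p5 by simp
  show "3 * r \<le> 2 * (r - 1 - t) + (3 + (r - 1) + 2 * t)" if "t \<le> r - 1" for t using that r by linarith
  fix t j i assume t: "t \<le> r - 1" "p ^ t dvd k" and j: "j < length lam" and i: "i < lam ! j"
  define bl where "bl = blk lam (map (\<lambda>x. p ^ (r - 1) * x) ns) j"
  have lb: "length bl = lam ! j" and ent: "\<forall>x\<in>set bl. p ^ (r - 1) dvd x"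
    unfolding bl_def using blk_len_entries[OF len j] by auto
  have "lam ! j \<le> 2"
  proof -
    have "lam ! j \<in> set lam" using j by simp
    hence "lam ! j \<le> Max (set lam)" by simp
    thus ?thesis using mx by simp
  qed
  hence i01: "i = 0 \<or> i = 1" using i by auto
  have il: "i < length bl" using i lb by simp
  note fd = fab_dvd[OF ent t(1) t(2) il]
  have b0: "p ^ (r - 1) dvd bl ! 0" using ent lb i by (metis nth_mem gr_zeroI less_nat_zero_code)
  show "\<exists>e1 e2 e3. p ^ e1 dvd fa bl k i \<and> p ^ e2 dvd fb bl k i \<and> p ^ e3 dvd (fa bl k i - fb bl k i) \<and>
      3 + (r - 1) + 2 * t \<le> 3 + e1 + e2 + e3"
  proof (cases "i = 0")
    case True
    have "p ^ (r - 1) dvd fa bl k i" using True b0 lb i by (simp add: fa0)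
    thus ?thesis using fd by (intro exI[of _ "r - 1"] exI[of _ t]) auto
  next
    case False
    hence "i = 1" using i01 by simp
    have "fa bl k 1 - fb bl k 1 = bl ! 0" using lb i \<open>i = 1\<close> by (intro fab1) auto
    hence "p ^ (r - 1) dvd fa bl k i - fb bl k i" using \<open>i = 1\<close> b0 by simp
    thus ?thesis using fd by (intro exI[of _ t] exI[of _ t] exI[of _ "r - 1"]) auto
  qed
qed

lemma part_a_odd:
  fixes p k :: int and ns :: "int list"
  assumes p: "prime p" and po: "odd p" and lam2: "length lam \<ge> 2" and pos: "\<forall>x\<in>set lam. x > 0"
    and len: "length ns = sum_list lam" and r: "r \<ge> 1"
  shows "p ^ (2 * r) dvd A_lam lam (map (\<lambda>x. p ^ r * x) ns) (p * k) - A_lam lam (map (\<lambda>x. p ^ (r - 1) * x) ns) k"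
proof (rule part_gen_odd[OF p po _ _ flat_uP_2[OF po] lam2 pos len r, where E = "\<lambda>t. 2 + 3 * t"])
  have "p \<ge> 2" using p prime_ge_2_int by blast
  hence "p \<noteq> 2 \<Longrightarrow> p \<ge> 3" by linarith
  moreover have "p \<noteq> 2" using po by auto
  ultimately show "int 2 < p" by simp
  show "1 \<le> (2::nat)" by simp
  show "2 * r \<le> 2 * (r - 1 - t) + (2 + 3 * t)" if "t \<le> r - 1" for t using that r by linarith
  fix t j i assume t: "t \<le> r - 1" "p ^ t dvd k" and j: "j < length lam" and i: "i < lam ! j"
  define bl where "bl = blk lam (map (\<lambda>x. p ^ (r - 1) * x) ns) j"
  have lb: "length bl = lam ! j" and ent: "\<forall>x\<in>set bl. p ^ (r - 1) dvd x"
    unfolding bl_def using blk_len_entries[OF len j] by auto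
  have il: "i < length bl" using i lb by simp
  note fd = fab_dvd[OF ent t(1) t(2) il]
  show "\<exists>e1 e2 e3. p ^ e1 dvd fa bl k i \<and> p ^ e2 dvd fb bl k i \<and> p ^ e3 dvd (fa bl k i - fb bl k i) \<and>
      2 + 3 * t \<le> 2 + e1 + e2 + e3"
    using fd by (intro exI[of _ t]) auto
qed

lemma two_adic:
  fixes a b :: int
  assumes "2 ^ t dvd a" "2 ^ t dvd b"
  shows "2 ^ Suc t dvd a \<or> 2 ^ Suc t dvd b \<or> 2 ^ Suc t dvd a - b"
proof -
  obtain a' b' where ab: "a = 2 ^ t * a'" "b = 2 ^ t * b'" using assms by (auto elim!: dvdE)
  consider "even a'" | "even b'" | "odd a' \<and> odd b'" by blast
  thus ?thesis
  proof cases
    case 1 thus ?thesis using ab by (auto elim!: evenE simp: mult.assoc)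
  next
    case 2 thus ?thesis using ab by (auto elim!: evenE simp: mult.assoc)
  next
    case 3
    hence "even (a' - b')" by simp
    then obtain d where "a' - b' = 2 * d" by (rule evenE)
    hence "a - b = 2 ^ Suc t * d" using ab by (simp add: algebra_simps)
    thus ?thesis by simp
  qed
qed

lemma prod_pm1:
  assumes "finite I" "\<And>i. i \<in> I \<Longrightarrow> s i = 1 \<or> s i = (-1::int)"
  shows "prod s I = 1 \<or> prod s I = -1"
  using assms
proof (induction I rule: finite_induct)
  case (insert x F)
  have "s x = 1 \<or> s x = -1" using insert.prems by auto
  moreover have "prod s F = 1 \<or> prod s F = -1" using insert by auto
  ultimately show ?case using insert.hyps by auto
qed simp

lemma zsign_pm1: "zsign p a b = 1 \<or> zsign p a b = -1"
  unfolding zsign_def by auto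

lemma even_factor:
  assumes "odd (b * (a - b))"
  shows "2 dvd zbinom a b"
proof -
  have ob: "odd b" and oab: "odd (a - b)" using assms by auto
  hence "even a" by (metis diff_add_cancel odd_add)
  hence "2 dvd a * zbinom (a - 1) (b - 1)" by simp
  hence "2 dvd b * zbinom a b" by (simp add: zbinom_absorb)
  thus ?thesis using ob by simp
qed

lemma zsign_two: "zsign 2 a b = (if even (b * (a - b)) then 1 else -1)"
  unfolding zsign_def by simp

lemma sign_two:
  fixes k :: int and ns :: "int list"
  assumes lam2: "length lam \<ge> 2" and pos: "\<forall>x\<in>set lam. x > 0"
    and len: "length ns = sum_list lam" and r: "r \<ge> 1"
    and sg: "(\<Prod>j<length lam. \<Prod>i<lam ! j. zsign 2 (fa (blk lam (map (\<lambda>x. 2 ^ (r - 1) * x) ns) j) k i)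
                 (fb (blk lam (map (\<lambda>x. 2 ^ (r - 1) * x) ns) j) k i)) \<noteq> 1"
  shows "(2::int) ^ (2 * r - 1) dvd A_lam lam (map (\<lambda>x. 2 ^ (r - 1) * x) ns) k"
proof -
  define ms where "ms = map (\<lambda>x. (2::int) ^ (r - 1) * x) ns"
  define bl where "bl j = blk lam ms j" for j
  define F where "F j i = zbinom (fa (bl j) k i) (fb (bl j) k i)" for j i
  define M where "M j = (\<Prod>i<lam ! j. F j i)" for j
  define Z where "Z j i = zsign 2 (fa (bl j) k i) (fb (bl j) k i)" for j i
  have lenm: "length ms = sum_list lam" unfolding ms_def using len by simp
  have entm: "\<forall>x\<in>set ms. (2::int) ^ (r - 1) dvd x" unfolding ms_def by auto
  have lb: "length (bl j) = lam ! j" if "j < length lam" for j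
    unfolding bl_def by (rule length_blk[OF lenm that])
  have ent: "\<forall>x\<in>set (bl j). (2::int) ^ (r - 1) dvd x" for j
    unfolding bl_def by (rule blk_entries[OF entm])
  have AQ: "A_lam lam ms k = (\<Prod>j<length lam. M j)"
    unfolding A_lam_Q[OF lenm] M_def F_def bl_def ..
  have FM: "F j i dvd M j" if "i < lam ! j" for j i
    unfolding M_def using that by (intro dvd_prodI) auto
  have MA: "M j dvd A_lam lam ms k" if "j < length lam" for j
    unfolding AQ using that by (intro dvd_prodI) auto
  have sg': "(\<Prod>j<length lam. \<Prod>i<lam ! j. Z j i) \<noteq> 1" using sg unfolding Z_def bl_def ms_def .
  have E1: "2 dvd F j i" if "Z j i \<noteq> 1" for j i
    using that unfolding Z_def F_def zsign_two by (intro even_factor) (auto split: if_splits)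
  have nonone: "\<exists>j<length lam. \<exists>i<lam ! j. Z j i \<noteq> 1"
  proof (rule ccontr)
    assume "\<not> ?thesis"
    hence "(\<Prod>j<length lam. \<Prod>i<lam ! j. Z j i) = 1" by (auto intro!: prod.neutral)
    thus False using sg' by simp
  qed
  have "2 ^ (2 * r - 1) dvd A_lam lam ms k"
  proof (cases "r = 1")
    case True
    from nonone obtain j i where ji: "j < length lam" "i < lam ! j" "Z j i \<noteq> 1" by blast
    have "2 dvd F j i" by (rule E1[OF ji(3)])
    also have "F j i dvd M j" by (rule FM[OF ji(2)])
    also have "M j dvd A_lam lam ms k" by (rule MA[OF ji(1)])
    finally show ?thesis using True by simp
  next
    case False
    hence r2: "r \<ge> 2" using r by simp
    have ev: "even x" if "x \<in> set (bl j)" for x j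
    proof -
      have "(2::int) dvd 2 ^ (r - 1)" using r2 by (simp add: dvd_power)
      thus ?thesis using ent that dvd_trans by blast
    qed
    have evi: "even (bl j ! i)" if "j < length lam" "i < lam ! j" for j i
      using ev[of "bl j ! i" j] that lb by simp
    have kodd: "odd k"
    proof
      assume ek: "even k"
      have "Z j i = 1" if "j < length lam" "i < lam ! j" for j i
      proof -
        have "even (fb (bl j) k i)" unfolding fb_def using evi[OF that] ek by simp
        thus ?thesis unfolding Z_def zsign_two by simp
      qed
      thus False using nonone by blast
    qed
    have F0: "2 ^ (r - 1) dvd F j 0" if "j < length lam" for j
    proof -
      have lp: "0 < lam ! j" using pos that by auto
      have b0: "2 ^ (r - 1) dvd bl j ! 0" using ent[of j] lb[OF that] lp by (metis nth_mem)
      have "2 ^ (r - 1 - 0) dvd zbinom (bl j ! 0) (bl j ! 0 - k)"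
        by (rule first_factor[OF _ b0]) (use r2 kodd in auto)

      thus ?thesis unfolding F_def using lb[OF that] lp by (simp add: fa0 fb0)
    qed
    have M0: "2 ^ (r - 1) dvd M j" if "j < length lam" for j
    proof -
      have "0 < lam ! j" using pos that by auto
      thus ?thesis using F0[OF that] FM[of 0 j] dvd_trans by blast
    qed
    consider "length lam \<ge> 3" | "length lam < 3 \<and> (\<exists>j<length lam. lam ! j \<ge> 3)"
      | "length lam = 2 \<and> (\<forall>j<length lam. lam ! j \<le> 2)" using lam2 by force
    thus ?thesis
    proof cases
      case 1
      have m0: "2 ^ (r - 1) dvd M 0" using M0[of 0] 1 by linarith
      have m1: "2 ^ (r - 1) dvd M 1" using M0[of 1] 1 by linarith
      have m2: "2 ^ (r - 1) dvd M 2" using M0[of 2] 1 by linarith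
      have "2 ^ (r - 1) * 2 ^ (r - 1) * 2 ^ (r - 1) dvd M 0 * M 1 * M 2"
        using m0 m1 m2 by (intro mult_dvd_mono)
      also have "M 0 * M 1 * M 2 = (\<Prod>j\<in>{0, 1, 2}. M j)" by simp
      also have "\<dots> dvd (\<Prod>j<length lam. M j)" using 1 by (intro prod_dvd_prod_subset) auto
      finally have "2 ^ (r - 1 + (r - 1 + (r - 1))) dvd A_lam lam ms k" unfolding AQ by (simp add: power_add[symmetric] mult_ac)
      moreover have "r - 1 + (r - 1 + (r - 1)) = 3 * (r - 1)" by simp
      ultimately have "2 ^ (3 * (r - 1)) dvd A_lam lam ms k" by metis
      moreover have "(2::int) ^ (2 * r - 1) dvd 2 ^ (3 * (r - 1))" using r2 by (intro le_imp_power_dvd) linarith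
      ultimately show ?thesis using dvd_trans by blast
    next
      case 2
      then obtain j where j: "j < length lam" "lam ! j \<ge> 3" by blast
      define j' where "j' = (if j = 0 then 1 else 0 :: nat)"
      have j': "j' < length lam" "j' \<noteq> j" unfolding j'_def using lam2 by auto
      have F2: "2 dvd F j 2"
      proof (rule E1)
        have l3: "2 < length (bl j)" using lb[OF j(1)] j(2) by simp
        have "even (sum_list (take (Suc 2) (bl j)))"
          by (rule dvd_sum_list_all) (use ev in \<open>auto dest: in_set_takeD\<close>)
        hence efa: "even (fa (bl j) k 2)" unfolding fa_def by simp
        have ofb: "odd (fb (bl j) k 2)" unfolding fb_def using evi[of j 2] j kodd by simp
        have "odd (fb (bl j) k 2 * (fa (bl j) k 2 - fb (bl j) k 2))" using efa ofb by simp
        thus "Z j 2 \<noteq> 1" unfolding Z_def zsign_two by simp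
      qed
      have "2 ^ (r - 1) * 2 dvd F j 0 * F j 2" using F0[OF j(1)] F2 by (rule mult_dvd_mono)
      also have "F j 0 * F j 2 = (\<Prod>i\<in>{0, 2}. F j i)" by simp
      also have "\<dots> dvd M j" unfolding M_def using j(2) by (intro prod_dvd_prod_subset) auto
      finally have d1: "2 ^ (r - 1) * 2 dvd M j" .
      have "2 ^ (r - 1) * 2 * 2 ^ (r - 1) dvd M j * M j'" using d1 M0[OF j'(1)] by (rule mult_dvd_mono)
      also have "M j * M j' = (\<Prod>i\<in>{j, j'}. M i)" using j' by simp
      also have "\<dots> dvd (\<Prod>j<length lam. M j)" using j j' by (intro prod_dvd_prod_subset) auto
      finally have "2 ^ (r - 1) * 2 * 2 ^ (r - 1) dvd A_lam lam ms k" unfolding AQ .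
      moreover have "(2::int) ^ (r - 1) * 2 * 2 ^ (r - 1) = 2 ^ (2 * r - 1)"
      proof -
        have "(2::int) ^ (r - 1) * 2 * 2 ^ (r - 1) = 2 ^ (r - 1 + 1 + (r - 1))" by (simp add: power_add)
        also have "r - 1 + 1 + (r - 1) = 2 * r - 1" using r2 by simp
        finally show ?thesis .
      qed
      ultimately show ?thesis by simp
    next
      case 3
      have blockm1: "(\<Prod>i<lam ! j. Z j i) = -1" if j: "j < length lam" for j
      proof -
        have lp: "0 < lam ! j" using pos j by auto
        have le2: "lam ! j \<le> 2" using 3 j by auto
        have Z0: "Z j 0 = -1"
        proof -
          have "fa (bl j) k 0 - fb (bl j) k 0 = k" using lb[OF j] lp by (simp add: fa0 fb0)
          moreover have "odd (fb (bl j) k 0)" unfolding fb_def using evi[OF j lp] kodd by simp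
          ultimately have "odd (fb (bl j) k 0 * (fa (bl j) k 0 - fb (bl j) k 0))" using kodd by simp
          thus ?thesis unfolding Z_def zsign_two by simp
        qed
        show ?thesis
        proof (cases "lam ! j = 1")
          case True thus ?thesis using Z0 by simp
        next
          case False
          hence l2: "lam ! j = 2" using lp le2 by simp
          have Z1: "Z j 1 = 1"
          proof -
            have "fa (bl j) k 1 - fb (bl j) k 1 = bl j ! 0" using lb[OF j] l2 by (intro fab1) auto
            moreover have "even (bl j ! 0)" using evi[OF j] lp by simp
            ultimately have "even (fb (bl j) k 1 * (fa (bl j) k 1 - fb (bl j) k 1))" by simp
            thus ?thesis unfolding Z_def zsign_two by simp
          qed
          have "{..<lam ! j} = {0, 1}" using l2 by auto
          thus ?thesis using Z0 Z1 by simp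
        qed
      qed
      have "(\<Prod>j<length lam. \<Prod>i<lam ! j. Z j i) = (\<Prod>j<length lam. (-1::int))"
        using blockm1 by (intro prod.cong) auto
      also have "\<dots> = 1" using 3 by simp
      finally show ?thesis using sg' by simp
    qed
  qed
  thus ?thesis unfolding ms_def .
qed

lemma part_a_two:
  fixes k :: int and ns :: "int list"
  assumes lam2: "length lam \<ge> 2" and pos: "\<forall>x\<in>set lam. x > 0"
    and len: "length ns = sum_list lam" and r: "r \<ge> 1"
  shows "(2::int) ^ (2 * r) dvd A_lam lam (map (\<lambda>x. 2 ^ r * x) ns) (2 * k) - A_lam lam (map (\<lambda>x. 2 ^ (r - 1) * x) ns) k"
proof -
  define ms where "ms = map (\<lambda>x. (2::int) ^ (r - 1) * x) ns"
  define \<sigma> where "\<sigma> = (\<Prod>j<length lam. \<Prod>i<lam ! j. zsign 2 (fa (blk lam ms j) k i) (fb (blk lam ms j) k i))"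
  obtain t where t: "t \<le> r - 1" "(2::int) ^ t dvd k" "t < r - 1 \<longrightarrow> \<not> (2::int) ^ Suc t dvd k"
    using exists_t by blast
  have p: "prime (2::int)" by simp
  have "(2::int) ^ (2 * r) dvd A_lam lam (map (\<lambda>x. 2 * x) ms) (2 * k) - A_lam lam ms k"
  proof (rule main_gen[OF p _ _ flat_uP_two lam2 pos, where E = "2 + 3 * t" and \<sigma> = \<sigma>])
    show "1 \<le> (1::nat)" by simp
    show "int 1 < (2::int)" by simp
    show "length ms = sum_list lam" "\<forall>x\<in>set ms. (2::int) ^ (r - 1) dvd x"
      unfolding ms_def using ms_facts[OF len] by auto
    show "t \<le> r - 1" "(2::int) ^ t dvd k" "t < r - 1 \<longrightarrow> \<not> (2::int) ^ Suc t dvd k" by (fact t)+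
    show "2 * r \<le> 2 * (r - 1 - t) + (2 + 3 * t)" using t r by linarith
    show "\<sigma> = (\<Prod>j<length lam. \<Prod>i<lam ! j. zsign 2 (fa (blk lam ms j) k i) (fb (blk lam ms j) k i))"
      unfolding \<sigma>_def ..
    show "\<sigma> = 1 \<or> (\<sigma> = -1 \<and> (2::int) ^ (2 * r) dvd 2 * A_lam lam ms k)"
    proof (cases "\<sigma> = 1")
      case False
      have pm: "\<sigma> = 1 \<or> \<sigma> = -1" unfolding \<sigma>_def
        by (intro prod_pm1) (auto intro!: prod_pm1 zsign_pm1)
      have "(2::int) ^ (2 * r - 1) dvd A_lam lam ms k"
        unfolding ms_def by (rule sign_two[OF lam2 pos len r]) (use False in \<open>simp add: \<sigma>_def ms_def\<close>)
      hence "2 * (2::int) ^ (2 * r - 1) dvd 2 * A_lam lam ms k" by (rule mult_dvd_mono[OF dvd_refl])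
      moreover have "2 * (2::int) ^ (2 * r - 1) = 2 ^ (2 * r)" using r
        by (metis One_nat_def Suc_pred mult_pos_pos power_Suc zero_less_numeral less_le_trans zero_less_one)
      ultimately have "(2::int) ^ (2 * r) dvd 2 * A_lam lam ms k" by metis
      thus ?thesis using pm False by simp
    qed simp
    fix j i assume j: "j < length lam" and i: "i < lam ! j"
    define bl where "bl = blk lam ms j"
    have lb: "length bl = lam ! j" unfolding bl_def ms_def using blk_len_entries[OF len j] by simp
    have ent: "\<forall>x\<in>set bl. (2::int) ^ (r - 1) dvd x" unfolding bl_def ms_def using blk_len_entries[OF len j] by simp
    have il: "i < length bl" using i lb by simp
    note fd = fab_dvd[OF ent t(1) t(2) il]
    have "2 ^ Suc t dvd fa bl k i \<or> 2 ^ Suc t dvd fb bl k i \<or> 2 ^ Suc t dvd fa bl k i - fb bl k i"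
      by (rule two_adic[OF fd(1,2)])
    hence "\<exists>e1 e2 e3. (2::int) ^ e1 dvd fa bl k i \<and> 2 ^ e2 dvd fb bl k i \<and>
        2 ^ e3 dvd (fa bl k i - fb bl k i) \<and> 2 + 3 * t \<le> 1 + e1 + e2 + e3"
    proof (elim disjE)
      assume a: "2 ^ Suc t dvd fa bl k i"
      show ?thesis apply (rule exI[of _ "Suc t"], rule exI[of _ t], rule exI[of _ t]) using fd a by auto
    next
      assume a: "2 ^ Suc t dvd fb bl k i"
      show ?thesis apply (rule exI[of _ t], rule exI[of _ "Suc t"], rule exI[of _ t]) using fd a by auto
    next
      assume a: "2 ^ Suc t dvd fa bl k i - fb bl k i"
      show ?thesis apply (rule exI[of _ t], rule exI[of _ t], rule exI[of _ "Suc t"]) using fd a by auto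
    qed
    thus "\<exists>e1 e2 e3. (2::int) ^ e1 dvd fa (blk lam ms j) k i \<and> 2 ^ e2 dvd fb (blk lam ms j) k i \<and>
        2 ^ e3 dvd (fa (blk lam ms j) k i - fb (blk lam ms j) k i) \<and> 2 + 3 * t \<le> 1 + e1 + e2 + e3"
      unfolding bl_def .
  qed
  moreover have "map (\<lambda>x. 2 * x) ms = map (\<lambda>x. 2 ^ r * x) ns" unfolding ms_def by (rule map_scale[OF r])
  ultimately show ?thesis unfolding ms_def by (simp only:)
qed

theorem lemma5p3:
  fixes lam :: "nat list"
  assumes "length lam \<ge> 2"
    and "\<forall>x\<in>set lam. x > 0"
  shows "(\<forall>(p::int) (r::nat) (ns::int list) (k::int).
            prime p \<and> r \<ge> 1 \<and> length ns = sum_list lam \<longrightarrow>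
            [A_lam lam (map (\<lambda>x. p ^ r * x) ns) (p * k)
               = A_lam lam (map (\<lambda>x. p ^ (r - 1) * x) ns) k] (mod p ^ (2 * r)))
       \<and> (Max (set lam) \<le> 2 \<longrightarrow>
          (\<forall>(p::int) (r::nat) (ns::int list) (k::int).
            prime p \<and> p \<ge> 5 \<and> r \<ge> 1 \<and> length ns = sum_list lam \<longrightarrow>
            [A_lam lam (map (\<lambda>x. p ^ r * x) ns) (p * k)
               = A_lam lam (map (\<lambda>x. p ^ (r - 1) * x) ns) k] (mod p ^ (3 * r))))"
proof (intro conjI allI impI)
  fix p :: int and r :: nat and ns :: "int list" and k :: int
  assume h: "prime p \<and> 1 \<le> r \<and> length ns = sum_list lam"
  have "p ^ (2 * r) dvd A_lam lam (map (\<lambda>x. p ^ r * x) ns) (p * k) - A_lam lam (map (\<lambda>x. p ^ (r - 1) * x) ns) k"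
  proof (cases "p = 2")
    case True
    thus ?thesis using part_a_two[OF assms(1,2), of ns r k] h by simp
  next
    case False
    have "p \<ge> 2" using h prime_ge_2_int by blast
    hence "odd p" using h False prime_odd_int by force
    thus ?thesis using part_a_odd[OF _ _ assms(1,2)] h by blast
  qed
  thus "[A_lam lam (map (\<lambda>x. p ^ r * x) ns) (p * k) = A_lam lam (map (\<lambda>x. p ^ (r - 1) * x) ns) k] (mod p ^ (2 * r))"
    by (simp add: cong_iff_dvd_diff)
next
  fix p :: int and r :: nat and ns :: "int list" and k :: int
  assume mx: "Max (set lam) \<le> 2" and h: "prime p \<and> 5 \<le> p \<and> 1 \<le> r \<and> length ns = sum_list lam"
  have "p ^ (3 * r) dvd A_lam lam (map (\<lambda>x. p ^ r * x) ns) (p * k) - A_lam lam (map (\<lambda>x. p ^ (r - 1) * x) ns) k"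
    using part_b[OF _ _ assms(1,2) mx] h by blast
  thus "[A_lam lam (map (\<lambda>x. p ^ r * x) ns) (p * k) = A_lam lam (map (\<lambda>x. p ^ (r - 1) * x) ns) k] (mod p ^ (3 * r))"
    by (simp add: cong_iff_dvd_diff)
qed

end
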